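(* Let $(X,d)$ be a Cantor space. Then there exists $f\in\mathcal{H}(X)$ such that $f^3$ is topologically stable but $f$ is not topologically stable.
   Context: A Cantor space is a compact metric space without isolated points that is totally disconnected. $\mathcal{H}(X)$ is the set of homeomorphisms; $d_{C^0}(f,g)=\sup_x d(f(x),g(x))$; $D(f,g)=\max\{d_{C^0}(f,g),d_{C^0}(f^{-1},g^{-1})\}$. $f\in\mathcal{H}(X)$ is topologically stable if for every $\epsilon>0$ there is $\delta>0$ such that every $g\in\mathcal{H}(X)$ with $D(f,g)<\delta$ admits a continuous $h:X\to X$ with $d_{C^0}(h,\mathrm{id}_X)<\epsilon$ and $h\circ g=f\circ h$. *)

theory Defs
  imports "HOL-Analysis.Analysis"
begin

definition totally_disconnected_set :: "'a::topological_space set \<Rightarrow> bool" where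
  "totally_disconnected_set X \<longleftrightarrow> (\<forall>S. S \<subseteq> X \<and> connected S \<longrightarrow> (\<exists>a. S \<subseteq> {a}))"

definition cantor_space :: "'a::metric_space set \<Rightarrow> bool" where
  "cantor_space X \<longleftrightarrow> X \<noteq> {} \<and> compact X \<and> (\<forall>x\<in>X. x islimpt X)
      \<and> totally_disconnected_set X"

text \<open>The homeomorphisms of X (maps are only relevant on X).\<close>
definition homeos :: "'a::topological_space set \<Rightarrow> ('a \<Rightarrow> 'a) set" where
  "homeos X = {f. \<exists>g. homeomorphism X X f g}"

definition dC0 :: "'a::metric_space set \<Rightarrow> ('a \<Rightarrow> 'a) \<Rightarrow> ('a \<Rightarrow> 'a) \<Rightarrow> real" where
  "dC0 X f g = (SUP x\<in>X. dist (f x) (g x))"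

definition Dist_H :: "'a::metric_space set \<Rightarrow> ('a \<Rightarrow> 'a) \<Rightarrow> ('a \<Rightarrow> 'a) \<Rightarrow> real" where
  "Dist_H X f g = max (dC0 X f g) (dC0 X (inv_into X f) (inv_into X g))"

definition topologically_stable :: "'a::metric_space set \<Rightarrow> ('a \<Rightarrow> 'a) \<Rightarrow> bool" where
  "topologically_stable X f \<longleftrightarrow>
     (\<forall>\<epsilon>>0. \<exists>\<delta>>0. \<forall>g\<in>homeos X. Dist_H X f g < \<delta> \<longrightarrow>
        (\<exists>h. continuous_on X h \<and> h ` X \<subseteq> X \<and> dC0 X h id < \<epsilon>
             \<and> (\<forall>x\<in>X. h (g x) = f (h x))))"

end

theory Submission
  imports Defs
begin


definition clp :: "'a::metric_space set \<Rightarrow> 'a set \<Rightarrow> bool" where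
  "clp X C \<longleftrightarrow> openin (top_of_set X) C \<and> closedin (top_of_set X) C"

lemma clp_subset: "clp X C \<Longrightarrow> C \<subseteq> X"
  by (metis clp_def openin_subset topspace_euclidean_subtopology)

lemma clp_Int: "clp X A \<Longrightarrow> clp X B \<Longrightarrow> clp X (A \<inter> B)"
  by (auto simp: clp_def)

lemma clp_Diff: "clp X A \<Longrightarrow> clp X B \<Longrightarrow> clp X (A - B)"
  by (auto simp: clp_def)

lemma clp_Un: "clp X A \<Longrightarrow> clp X B \<Longrightarrow> clp X (A \<union> B)"
  by (auto simp: clp_def)

lemma clp_closed: "compact X \<Longrightarrow> clp X C \<Longrightarrow> closed C"
  by (meson clp_def closedin_closed_trans compact_imp_closed)

lemma clp_compact: "compact X \<Longrightarrow> clp X C \<Longrightarrow> compact C"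
proof -
  assume a: "compact X" "clp X C"
  then have "compact (X \<inter> C)" using clp_closed compact_Int_closed by blast
  moreover have "X \<inter> C = C" using clp_subset[OF a(2)] by blast
  ultimately show ?thesis by simp
qed

lemma cantor_clopen_base:
  assumes "cantor_space X" "x \<in> X" "r > 0"
  shows "\<exists>C. clp X C \<and> x \<in> C \<and> C \<subseteq> ball x r"
proof -
  let ?T = "top_of_set X"
  have cX: "compact X" using assms(1) by (simp add: cantor_space_def)
  have lc: "locally_compact_space ?T"
    by (rule compact_imp_locally_compact_space) (simp add: cX compact_space_subtopology)
  have H: "Hausdorff_space ?T"
    by (simp add: Hausdorff_space_subtopology)
  have cc: "connected_component_of_set ?T x = {x}"
  proof -
    have "connectedin ?T (connected_component_of_set ?T x)"
      by (rule connectedin_connected_component_of)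
    then have "connected (connected_component_of_set ?T x)" "connected_component_of_set ?T x \<subseteq> X"
      by (auto simp: connectedin_subtopology)
    moreover have "\<forall>S. S \<subseteq> X \<and> connected S \<longrightarrow> (\<exists>a. S \<subseteq> {a})"
      using assms(1) by (simp add: cantor_space_def totally_disconnected_set_def)
    ultimately obtain a where "connected_component_of_set ?T x \<subseteq> {a}"
      by metis
    moreover have "x \<in> connected_component_of_set ?T x"
      using assms(2) by (simp add: connected_component_of_refl)
    ultimately show ?thesis by blast
  qed
  have C: "{x} \<in> connected_components_of ?T"
    using connected_component_in_connected_components_of[of ?T x] assms(2) cc by simp
  have cmp: "compactin ?T {x}" using assms(2) by (simp add: compactin_subtopology)
  have W: "openin ?T (X \<inter> ball x r)" by auto
  obtain U V where UV: "openin ?T U" "openin ?T V" "disjnt U V" "U \<union> V = topspace ?T" "{x} \<subseteq> U" "U \<subseteq> X \<inter> ball x r"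
    by (rule wilder_locally_compact_component_thm[OF lc H C cmp W]) (use assms in auto)
  have "closedin ?T U"
  proof -
    have "U = topspace ?T - V" using UV(3,4) by (auto simp: disjnt_def)
    then show ?thesis using UV(2) by auto
  qed
  then show ?thesis using UV unfolding clp_def by blast
qed

lemma diam_le:
  fixes S :: "'a::metric_space set"
  assumes "\<And>x y. x \<in> S \<Longrightarrow> y \<in> S \<Longrightarrow> dist x y \<le> d" "0 \<le> d"
  shows "diameter S \<le> d"
  using assms by (auto simp: diameter_def intro!: cSUP_least)

lemma diam_ball_le:
  fixes S :: "'a::metric_space set"
  assumes "S \<subseteq> ball x r" "0 \<le> r"
  shows "diameter S \<le> 2 * r"
proof (rule diam_le)
  fix a b assume "a \<in> S" "b \<in> S"
  then have "dist x a < r" "dist x b < r" using assms by auto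
  then show "dist a b \<le> 2 * r" using dist_triangle[of a b x] by (simp add: dist_commute)
qed (use assms in auto)

definition part :: "'a::metric_space set \<Rightarrow> 'a set \<Rightarrow> 'a set set \<Rightarrow> real \<Rightarrow> bool" where
  "part X K P e \<longleftrightarrow> finite P \<and> (\<forall>Q\<in>P. clp X Q \<and> Q \<noteq> {} \<and> diameter Q < e \<and> bounded Q)
      \<and> \<Union>P = K \<and> pairwise disjnt P"

lemma part_from_cover:
  assumes "finite CC" "\<forall>C\<in>CC. clp X C \<and> diameter C < e \<and> bounded C" "clp X K" "K \<subseteq> \<Union>CC"
  shows "\<exists>P. part X K P e"
  using assms
proof (induction CC arbitrary: K rule: finite_induct)
  case empty
  then have "K = {}" by simp
  then have "part X K {} e" by (simp add: part_def)
  then show ?case by blast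
next
  case (insert C CC)
  have "clp X (K - C)" using insert by (simp add: clp_Diff)
  moreover have "K - C \<subseteq> \<Union>CC" using insert by auto
  ultimately obtain P where P: "part X (K - C) P e" using insert.IH insert.prems(1) by blast
  show ?case
  proof (cases "K \<inter> C = {}")
    case True
    then have "K - C = K" by auto
    then show ?thesis using P by auto
  next
    case False
    let ?A = "K \<inter> C"
    have Cp: "clp X C" "diameter C < e" "bounded C" using insert.prems(1) by auto
    have A1: "clp X ?A" using clp_Int[of X K C] insert.prems(2) Cp(1) by blast
    have A2: "bounded ?A" using bounded_subset[of C ?A] Cp(3) by blast
    have "diameter ?A \<le> diameter C" using diameter_subset[of ?A C] Cp(3) by blast
    then have A3: "diameter ?A < e" using Cp(2) by linarith
    note A = A1 A2 A3
    have disj: "\<forall>Q\<in>P. disjnt ?A Q" using P unfolding part_def by (auto simp: disjnt_def)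
    have "pairwise disjnt (insert ?A P)"
      using P disj unfolding part_def by (auto simp: pairwise_insert disjnt_sym)
    then have "part X K (insert ?A P) e" using P A False unfolding part_def by auto
    then show ?thesis by blast
  qed
qed

lemma part_exists:
  assumes "cantor_space X" "clp X K" "e > 0"
  shows "\<exists>P. part X K P e"
proof -
  have KX: "K \<subseteq> X" using assms(2) by (rule clp_subset)
  have cK: "compact K" using assms(1,2) clp_compact by (auto simp: cantor_space_def)
  have "\<forall>x\<in>K. \<exists>C. clp X C \<and> x \<in> C \<and> C \<subseteq> ball x (e/3)"
    using cantor_clopen_base[OF assms(1)] KX assms(3) by auto
  then obtain C where C: "\<And>x. x \<in> K \<Longrightarrow> clp X (C x) \<and> x \<in> C x \<and> C x \<subseteq> ball x (e/3)"
    by metis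
  have "\<forall>x\<in>K. \<exists>U. open U \<and> C x = X \<inter> U"
    using C by (auto simp: clp_def openin_open)
  then obtain Op where Op: "\<And>x. x \<in> K \<Longrightarrow> open (Op x) \<and> C x = X \<inter> Op x" by metis
  have "K \<subseteq> (\<Union>x\<in>K. Op x)" using C Op by blast
  then obtain K' where K': "K' \<subseteq> K" "finite K'" "K \<subseteq> (\<Union>x\<in>K'. Op x)"
    using compactE_image[OF cK, of K Op] Op by metis
  have cov: "K \<subseteq> \<Union>(C ` K')" using K' Op KX by blast
  have "\<forall>D\<in>C ` K'. clp X D \<and> diameter D < e \<and> bounded D"
  proof
    fix D assume "D \<in> C ` K'"
    then obtain x where x: "x \<in> K" "D = C x" using K' by auto
    then have "diameter D \<le> 2 * (e/3)" using C[of x] diam_ball_le[of D x "e/3"] assms(3) by auto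
    moreover have "bounded D" using C[of x] x bounded_ball bounded_subset by blast
    ultimately show "clp X D \<and> diameter D < e \<and> bounded D" using C x assms(3) by auto
  qed
  then show ?thesis using part_from_cover[of "C ` K'" X e K] K' cov assms(2) by auto
qed

lemma split2:
  assumes "cantor_space X" "clp X R" "R \<noteq> {}"
  shows "\<exists>A B. clp X A \<and> clp X B \<and> A \<noteq> {} \<and> B \<noteq> {} \<and> A \<inter> B = {} \<and> A \<union> B = R"
proof -
  obtain a where a: "a \<in> R" using assms(3) by auto
  obtain Op where Op: "open Op" "R = X \<inter> Op" using assms(2) by (auto simp: clp_def openin_open)
  have "a islimpt X" using assms(1) a Op by (auto simp: cantor_space_def)
  then obtain b where b: "b \<in> X" "b \<in> Op" "b \<noteq> a" using Op a unfolding islimpt_def by blast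
  have "b \<in> R" using b Op by auto
  have "a \<in> X" using a Op by auto
  obtain C where C: "clp X C" "a \<in> C" "C \<subseteq> ball a (dist a b)"
    using cantor_clopen_base[OF assms(1) \<open>a \<in> X\<close>, of "dist a b"] b by auto
  have "b \<notin> C" using C by auto
  show ?thesis
    by (rule exI[of _ "R \<inter> C"], rule exI[of _ "R - C"])
       (use C assms(2) a \<open>b \<in> R\<close> \<open>b \<notin> C\<close> clp_Int clp_Diff in auto)
qed

lemma part_card:
  assumes "cantor_space X" "clp X K" "K \<noteq> {}" "e > 0"
  shows "\<exists>N. \<forall>c\<ge>N. \<exists>P. part X K P e \<and> card P = c"
proof -
  obtain P0 where P0: "part X K P0 e" using part_exists assms by blast
  have "\<exists>P. part X K P e \<and> card P = c" if "c \<ge> card P0" for c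
    using that
  proof (induction c rule: dec_induct)
    case base
    then show ?case using P0 by blast
  next
    case (step c)
    then obtain P where P: "part X K P e" "card P = c" by blast
    then have "P \<noteq> {}" using assms(3) by (auto simp: part_def)
    then obtain Q where Q: "Q \<in> P" by auto
    then have Qp: "clp X Q" "Q \<noteq> {}" "diameter Q < e" "bounded Q" using P by (auto simp: part_def)
    obtain A B where AB: "clp X A" "clp X B" "A \<noteq> {}" "B \<noteq> {}" "A \<inter> B = {}" "A \<union> B = Q"
      using split2[OF assms(1) Qp(1,2)] by blast
    let ?P = "insert A (insert B (P - {Q}))"
    have fin: "finite P" using P by (simp add: part_def)
    have dis: "\<forall>R\<in>P - {Q}. R \<inter> Q = {}" using P Q by (auto simp: part_def pairwise_def disjnt_def)
    have nR: "\<forall>R\<in>P. R \<noteq> {}" using P by (auto simp: part_def)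
    have AnP: "A \<notin> P - {Q}" "B \<notin> P - {Q}" "A \<noteq> B" using dis AB by blast+
    have "card ?P = c + 1" using AnP fin P(2) Q by (simp add: card_insert_if) (metis Suc_pred card_gt_0_iff empty_iff)
    moreover have "part X K ?P e"
    proof -
      have "diameter A \<le> diameter Q" "diameter B \<le> diameter Q" "bounded A" "bounded B"
        using AB Qp diameter_subset bounded_subset by (metis Un_upper1 Un_upper2)+
      moreover have "\<Union>?P = K" using P AB Q by (auto simp: part_def)
      moreover have "pairwise disjnt ?P"
        using P AB dis by (auto simp: part_def pairwise_def disjnt_def)
      ultimately show ?thesis using P AB Qp fin unfolding part_def by auto
    qed
    ultimately show ?case by auto
  qed
  then show ?thesis by blast
qed


lemma homeos_D: "f \<in> homeos X \<Longrightarrow> \<exists>g. homeomorphism X X f g"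
  by (simp add: homeos_def)

lemma homeo_inv_into:
  assumes "homeomorphism X X f g" "y \<in> X"
  shows "inv_into X f y = g y"
proof -
  have inj: "inj_on f X"
    by (rule inj_on_inverseI[of _ g]) (rule homeomorphism_apply1[OF assms(1)])
  have gy: "g y \<in> X" using homeomorphism_image2[OF assms(1)] assms(2) by blast
  have "y = f (g y)" using assms by (simp add: homeomorphism_apply2)
  then show ?thesis using inv_into_f_f[OF inj gy] by simp
qed

lemma homeo_maps: "homeomorphism X X f g \<Longrightarrow> x \<in> X \<Longrightarrow> f x \<in> X"
  using homeomorphism_image1 by blast

lemma homeo_maps2: "homeomorphism X X f g \<Longrightarrow> x \<in> X \<Longrightarrow> g x \<in> X"
  using homeomorphism_image2 by blast

lemma funpow_maps: "(\<And>x. x \<in> X \<Longrightarrow> f x \<in> X) \<Longrightarrow> x \<in> X \<Longrightarrow> (f ^^ n) x \<in> X"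
  by (induction n) auto

lemma continuous_on_funpow:
  assumes "continuous_on X f" "\<And>x. x \<in> X \<Longrightarrow> f x \<in> X"
  shows "continuous_on X (f ^^ n)"
proof (induction n)
  case 0
  then show ?case by (simp add: continuous_on_id)
next
  case (Suc n)
  have sub: "(f ^^ n) ` X \<subseteq> X"
  proof
    fix y assume "y \<in> (f ^^ n) ` X"
    then obtain x where "x \<in> X" "y = (f ^^ n) x" by blast
    then show "y \<in> X" using funpow_maps[of X f x n] assms(2) by simp
  qed
  have "continuous_on X (f \<circ> (f ^^ n))"
    by (rule continuous_on_compose[OF Suc continuous_on_subset[OF assms(1) sub]])
  then show ?case by simp
qed

lemma dC0_upper:
  assumes "compact X" "continuous_on X f" "continuous_on X g" "x \<in> X"
  shows "dist (f x) (g x) \<le> dC0 X f g"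
proof -
  have "continuous_on X (\<lambda>x. dist (f x) (g x))"
    using assms by (intro continuous_intros)
  then have "compact ((\<lambda>x. dist (f x) (g x)) ` X)"
    using assms(1) compact_continuous_image by blast
  then have "bdd_above ((\<lambda>x. dist (f x) (g x)) ` X)"
    by (simp add: bounded_imp_bdd_above compact_imp_bounded)
  then show ?thesis unfolding dC0_def by (rule cSUP_upper[OF assms(4)])
qed

lemma dC0_le:
  assumes "X \<noteq> {}" "\<And>x. x \<in> X \<Longrightarrow> dist (f x) (g x) \<le> M"
  shows "dC0 X f g \<le> M"
  unfolding dC0_def using assms by (intro cSUP_least) auto

lemma locally_const_continuous:
  fixes h :: "'a::metric_space \<Rightarrow> 'b::metric_space"
  assumes "\<And>x. x \<in> X \<Longrightarrow> \<exists>U. openin (top_of_set X) U \<and> x \<in> U \<and> (\<forall>y\<in>U. h y = h x)"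
  shows "continuous_on X h"
  unfolding continuous_on_iff
proof (intro ballI allI impI)
  fix x e assume x: "x \<in> X" and e: "(0::real) < e"
  obtain U where U: "openin (top_of_set X) U" "x \<in> U" "\<forall>y\<in>U. h y = h x" using assms[OF x] by blast
  obtain T where T: "open T" "U = X \<inter> T" using U(1) unfolding openin_open by blast
  have xT: "x \<in> T" using T(2) U(2) by blast
  obtain d where d: "d > 0" "ball x d \<subseteq> T" using T(1) xT unfolding open_contains_ball by blast
  show "\<exists>d>0. \<forall>x'\<in>X. dist x' x < d \<longrightarrow> dist (h x') (h x) < e"
  proof (intro exI[of _ d] conjI ballI impI)
    fix y assume "y \<in> X" "dist y x < d"
    then have "dist x y < d" by (simp add: dist_commute)
    then have "y \<in> T" using d(2) by (auto simp: mem_ball)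
    then have "y \<in> U" using T(2) \<open>y \<in> X\<close> by blast
    then have "h y = h x" using U(3) by blast
    then show "dist (h y) (h x) < e" using e by simp
  qed (use d in auto)
qed

lemma setdist_pos_compact:
  fixes A B :: "'a::metric_space set"
  assumes "compact A" "compact B" "A \<noteq> {}" "B \<noteq> {}" "A \<inter> B = {}"
  shows "setdist A B > 0"
proof -
  obtain y where y: "y \<in> B" "setdist A B = infdist y A"
    using setdist_attains_inf[OF assms(2) assms(4)] by blast
  have "y \<notin> A" using y assms(5) by auto
  moreover have "closed A" using assms(1) by (rule compact_imp_closed)
  ultimately have "infdist y A > 0" using infdist_pos_not_in_closed[of A y] assms(3) by blast
  then show ?thesis using y(2) by simp
qed

lemma funpow_in:
  assumes "\<forall>Q\<in>P. \<pi> Q \<in> P" "Q \<in> P" shows "(\<pi> ^^ i) Q \<in> P"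
  using assms by (induction i) auto

lemma funpow_mult_fix:
  assumes "(\<pi> ^^ l) Q = Q" shows "(\<pi> ^^ (l * t)) Q = Q"
proof (induction t)
  case 0 then show ?case by simp
next
  case (Suc t)
  have "l * Suc t = l * t + l" by simp
  then have "(\<pi> ^^ (l * Suc t)) Q = (\<pi> ^^ (l * t)) ((\<pi> ^^ l) Q)"
    by (simp only: funpow_add o_apply)
  then show ?case using assms Suc by simp
qed

lemma funpow_mod_eq:
  assumes "(\<pi> ^^ l) Q = Q" shows "(\<pi> ^^ a) Q = (\<pi> ^^ (a mod l)) Q"
proof -
  have e: "a = a mod l + l * (a div l)" by simp
  have "(\<pi> ^^ (a mod l + l * (a div l))) Q = (\<pi> ^^ (a mod l)) ((\<pi> ^^ (l * (a div l))) Q)"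
    by (simp only: funpow_add o_apply)
  then have "(\<pi> ^^ a) Q = (\<pi> ^^ (a mod l)) ((\<pi> ^^ (l * (a div l))) Q)"
    using e by simp
  then show ?thesis using funpow_mult_fix[OF assms] by simp
qed

locale cyc =
  fixes P :: "'b set" and \<pi> :: "'b \<Rightarrow> 'b" and lm :: "'b \<Rightarrow> nat"
  assumes maps: "\<forall>Q\<in>P. \<pi> Q \<in> P"
    and inj: "inj_on \<pi> P"
    and lam: "\<forall>Q\<in>P. lm Q > 0 \<and> (\<forall>m. (\<pi> ^^ m) Q = Q \<longleftrightarrow> lm Q dvd m)"
begin

lemma pin: "Q \<in> P \<Longrightarrow> (\<pi> ^^ i) Q \<in> P"
  by (rule funpow_in[OF maps])

lemma lam_Q: "Q \<in> P \<Longrightarrow> lm Q > 0 \<and> (\<forall>m. (\<pi> ^^ m) Q = Q \<longleftrightarrow> lm Q dvd m)"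
  by (rule bspec[OF lam])

lemma lam_char: "Q \<in> P \<Longrightarrow> (\<pi> ^^ m) Q = Q \<longleftrightarrow> lm Q dvd m"
  using lam_Q by blast

lemma lam_fix: "Q \<in> P \<Longrightarrow> (\<pi> ^^ lm Q) Q = Q"
  using lam_char[of Q "lm Q"] by simp

lemma lam_pos: "Q \<in> P \<Longrightarrow> lm Q > 0"
  using lam_Q by blast

lemma lam_step: "Q \<in> P \<Longrightarrow> lm (\<pi> Q) = lm Q"
proof -
  assume Q: "Q \<in> P"
  have PQ: "\<pi> Q \<in> P" using maps Q by blast
  have *: "(\<pi> ^^ m) (\<pi> Q) = \<pi> Q \<longleftrightarrow> (\<pi> ^^ m) Q = Q" for m
  proof -
    have "(\<pi> ^^ m) (\<pi> Q) = \<pi> ((\<pi> ^^ m) Q)" by (simp add: funpow_swap1)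
    moreover have "\<pi> ((\<pi> ^^ m) Q) = \<pi> Q \<longleftrightarrow> (\<pi> ^^ m) Q = Q"
    proof
      assume "\<pi> ((\<pi> ^^ m) Q) = \<pi> Q"
      then show "(\<pi> ^^ m) Q = Q" using inj pin[OF Q, of m] Q unfolding inj_on_def by blast
    qed simp
    ultimately show ?thesis by simp
  qed
  have "lm (\<pi> Q) dvd m \<longleftrightarrow> lm Q dvd m" for m
    using lam_char[OF PQ, of m] lam_char[OF Q, of m] *[of m] by simp
  then show ?thesis by (meson dvd_antisym dvd_refl)
qed

lemma lam_iter: "Q \<in> P \<Longrightarrow> lm ((\<pi> ^^ i) Q) = lm Q"
  by (induction i) (auto simp: lam_step pin)

lemma mod_eq:
  assumes R: "R \<in> P"
  shows "(\<pi> ^^ a) R = (\<pi> ^^ b) R \<longleftrightarrow> a mod lm R = b mod lm R"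
proof -
  let ?l = "lm R"
  have l: "?l > 0" "(\<pi> ^^ ?l) R = R" using lam_pos[OF R] lam_fix[OF R] by auto
  have key: "(\<pi> ^^ a') R = (\<pi> ^^ b') R \<Longrightarrow> a' < ?l \<Longrightarrow> b' < ?l \<Longrightarrow> a' \<le> b' \<Longrightarrow> a' = b'" for a' b'
  proof -
    assume e: "(\<pi> ^^ a') R = (\<pi> ^^ b') R" and lt: "a' < ?l" "b' < ?l" "a' \<le> b'"
    have "(\<pi> ^^ (?l - b' + a')) R = (\<pi> ^^ (?l - b')) ((\<pi> ^^ a') R)"
      by (simp only: funpow_add o_apply)
    also have "\<dots> = (\<pi> ^^ (?l - b')) ((\<pi> ^^ b') R)" using e by simp
    also have "\<dots> = (\<pi> ^^ (?l - b' + b')) R" by (simp only: funpow_add o_apply)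
    also have "\<dots> = (\<pi> ^^ ?l) R" using lt by simp
    also have "\<dots> = R" using l by simp
    finally have "?l dvd (?l - b' + a')" using lam_char[OF R] by blast
    moreover have "?l - b' + a' > 0" "?l - b' + a' \<le> ?l" using lt by auto
    ultimately have "?l - b' + a' = ?l" using dvd_imp_le by (meson le_antisym)
    then show "a' = b'" using lt by linarith
  qed
  have "(\<pi> ^^ a) R = (\<pi> ^^ (a mod ?l)) R" "(\<pi> ^^ b) R = (\<pi> ^^ (b mod ?l)) R"
    using funpow_mod_eq[OF l(2)] by auto
  moreover have "a mod ?l < ?l" "b mod ?l < ?l" using l by auto
  moreover have "(\<pi> ^^ a') R = (\<pi> ^^ b') R \<Longrightarrow> a' < ?l \<Longrightarrow> b' < ?l \<Longrightarrow> a' = b'" for a' b'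
    using key[of a' b'] key[of b' a'] by (cases "a' \<le> b'") auto
  ultimately show ?thesis by metis
qed

definition orb :: "'b \<Rightarrow> 'b set" where "orb Q = range (\<lambda>i. (\<pi> ^^ i) Q)"
definition rep :: "'b \<Rightarrow> 'b" where "rep Q = (SOME R. R \<in> orb Q)"
definition jj :: "'b \<Rightarrow> nat" where "jj Q = (LEAST j. (\<pi> ^^ j) (rep Q) = Q)"

lemma orb_step: "Q \<in> P \<Longrightarrow> orb (\<pi> Q) = orb Q"
proof -
  assume Q: "Q \<in> P"
  have "(\<pi> ^^ i) (\<pi> Q) \<in> orb Q" for i
    unfolding orb_def by (metis funpow_Suc_right o_apply rangeI)
  moreover have "(\<pi> ^^ i) Q \<in> orb (\<pi> Q)" for i
  proof -
    have "(\<pi> ^^ i) Q = (\<pi> ^^ i) ((\<pi> ^^ lm Q) Q)" using lam_fix Q by simp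
    also have "(\<pi> ^^ lm Q) Q = (\<pi> ^^ (lm Q - 1)) (\<pi> Q)"
    proof -
      have "lm Q = Suc (lm Q - 1)" using lam_pos[OF Q] by simp
      then have "(\<pi> ^^ lm Q) Q = (\<pi> ^^ Suc (lm Q - 1)) Q" by simp
      also have "\<dots> = (\<pi> ^^ (lm Q - 1)) (\<pi> Q)" by (simp only: funpow_Suc_right o_apply)
      finally show ?thesis .
    qed
    also have "(\<pi> ^^ i) ((\<pi> ^^ (lm Q - 1)) (\<pi> Q)) = (\<pi> ^^ (i + (lm Q - 1))) (\<pi> Q)"
      by (simp only: funpow_add o_apply)
    finally show ?thesis unfolding orb_def by auto
  qed
  ultimately show ?thesis unfolding orb_def by blast
qed

lemma rep_in: "Q \<in> P \<Longrightarrow> rep Q \<in> orb Q"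
  unfolding rep_def by (rule someI[of _ Q]) (auto simp: orb_def intro: range_eqI[of _ _ 0])

lemma rep_step: "Q \<in> P \<Longrightarrow> rep (\<pi> Q) = rep Q"
  unfolding rep_def using orb_step by simp

lemma rep_ex: "Q \<in> P \<Longrightarrow> \<exists>k. rep Q = (\<pi> ^^ k) Q"
  using rep_in unfolding orb_def by blast

lemma rep_P: "Q \<in> P \<Longrightarrow> rep Q \<in> P"
proof -
  assume Q: "Q \<in> P"
  then obtain k where "rep Q = (\<pi> ^^ k) Q" using rep_ex by blast
  then show ?thesis using pin[OF Q, of k] by simp
qed

lemma lam_rep: "Q \<in> P \<Longrightarrow> lm (rep Q) = lm Q"
proof -
  assume Q: "Q \<in> P"
  then obtain k where "rep Q = (\<pi> ^^ k) Q" using rep_ex by blast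
  then show ?thesis using lam_iter[OF Q, of k] by simp
qed

lemma jj_ex: "Q \<in> P \<Longrightarrow> (\<pi> ^^ jj Q) (rep Q) = Q \<and> jj Q < lm Q"
proof -
  assume Q: "Q \<in> P"
  obtain k where k: "rep Q = (\<pi> ^^ k) Q" using rep_in[OF Q] unfolding orb_def by auto
  have ex: "(\<pi> ^^ (lm Q * k - k)) (rep Q) = Q"
  proof -
    have "k \<le> lm Q * k" using lam_pos[OF Q] by simp
    have "(\<pi> ^^ (lm Q * k - k)) ((\<pi> ^^ k) Q) = (\<pi> ^^ (lm Q * k - k + k)) Q"
      by (simp only: funpow_add o_apply)
    then have "(\<pi> ^^ (lm Q * k - k)) (rep Q) = (\<pi> ^^ (lm Q * k)) Q"
      using k \<open>k \<le> lm Q * k\<close> by simp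
    then show ?thesis using funpow_mult_fix[OF lam_fix[OF Q]] by simp
  qed
  then have j1: "(\<pi> ^^ jj Q) (rep Q) = Q" unfolding jj_def by (rule LeastI)
  have "(\<pi> ^^ jj Q) (rep Q) = (\<pi> ^^ (jj Q mod lm (rep Q))) (rep Q)"
    by (rule funpow_mod_eq[OF lam_fix[OF rep_P[OF Q]]])
  then have "(\<pi> ^^ (jj Q mod lm Q)) (rep Q) = Q"
    using j1 lam_rep[OF Q] by simp
  then have "jj Q \<le> jj Q mod lm Q" unfolding jj_def by (rule Least_le)
  moreover have "jj Q mod lm Q < lm Q" using lam_pos[OF Q] by simp
  ultimately have "jj Q < lm Q" by linarith
  then show ?thesis using j1 by simp
qed

lemma jj_step: "Q \<in> P \<Longrightarrow> jj (\<pi> Q) = Suc (jj Q) mod lm Q"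
proof -
  assume Q: "Q \<in> P"
  have PQ: "\<pi> Q \<in> P" using maps Q by auto
  have a: "(\<pi> ^^ jj (\<pi> Q)) (rep Q) = \<pi> Q" "jj (\<pi> Q) < lm Q"
    using jj_ex[OF PQ] rep_step[OF Q] lam_step[OF Q] by auto
  have b: "(\<pi> ^^ Suc (jj Q)) (rep Q) = \<pi> Q" using jj_ex[OF Q] by simp
  have "(\<pi> ^^ jj (\<pi> Q)) (rep Q) = (\<pi> ^^ Suc (jj Q)) (rep Q)" using a(1) b by simp
  then have "jj (\<pi> Q) mod lm (rep Q) = Suc (jj Q) mod lm (rep Q)"
    using mod_eq[OF rep_P[OF Q]] by blast
  then have "jj (\<pi> Q) mod lm Q = Suc (jj Q) mod lm Q" using lam_rep[OF Q] by simp
  then show ?thesis using a(2) by simp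
qed

lemma section_exists:
  fixes F :: "'a \<Rightarrow> 'a" and q :: "'b \<Rightarrow> 'a" and mem :: "'a \<Rightarrow> 'b \<Rightarrow> bool"
  assumes Fm: "\<And>Q x. Q \<in> P \<Longrightarrow> mem x Q \<Longrightarrow> mem (F x) (\<pi> Q)"
    and q: "\<And>Q. Q \<in> P \<Longrightarrow> mem (q Q) Q \<and> (F ^^ lm Q) (q Q) = q Q"
  shows "\<exists>p. \<forall>Q\<in>P. mem (p Q) Q \<and> F (p Q) = p (\<pi> Q)"
proof -
  define p where "p Q = (F ^^ jj Q) (q (rep Q))" for Q
  have it: "R \<in> P \<Longrightarrow> mem x R \<Longrightarrow> mem ((F ^^ i) x) ((\<pi> ^^ i) R)" for R x i
    by (induction i) (auto simp: Fm pin)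
  have "mem (p Q) Q \<and> F (p Q) = p (\<pi> Q)" if Q: "Q \<in> P" for Q
  proof
    show "mem (p Q) Q" unfolding p_def using it[OF rep_P[OF Q] q[OF rep_P[OF Q], THEN conjunct1], of "jj Q"]
      jj_ex[OF Q] by simp
    have qr: "(F ^^ lm Q) (q (rep Q)) = q (rep Q)" using q[OF rep_P[OF Q]] lam_rep[OF Q] by simp
    show "F (p Q) = p (\<pi> Q)"
    proof (cases "Suc (jj Q) < lm Q")
      case True
      then show ?thesis unfolding p_def using jj_step[OF Q] rep_step[OF Q] by simp
    next
      case False
      then have "Suc (jj Q) = lm Q" using jj_ex[OF Q] by simp
      then have "F (p Q) = q (rep Q)" unfolding p_def using qr by (metis funpow.simps(2) o_apply)
      moreover have "p (\<pi> Q) = q (rep Q)" unfolding p_def using jj_step[OF Q] rep_step[OF Q] \<open>Suc (jj Q) = lm Q\<close> by simp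
      ultimately show ?thesis by simp
    qed
  qed
  then show ?thesis by blast
qed

end


lemma Dist_H_ge: "dC0 X f g \<le> Dist_H X f g" "dC0 X (inv_into X f) (inv_into X g) \<le> Dist_H X f g"
  by (auto simp: Dist_H_def)

lemma part_unique:
  assumes "part X K P e" "Q \<in> P" "R \<in> P" "x \<in> Q" "x \<in> R"
  shows "Q = R"
  using assms unfolding part_def pairwise_def disjnt_def by blast

lemma part_cover:
  assumes "part X K P e" "x \<in> K"
  shows "\<exists>Q\<in>P. x \<in> Q"
  using assms unfolding part_def by blast

lemma ts_criterion:
  fixes F :: "'a::metric_space \<Rightarrow> 'a"
  assumes X: "compact X" "X \<noteq> {}" and F: "F \<in> homeos X"
    and crit: "\<And>\<epsilon>. \<epsilon> > 0 \<Longrightarrow> \<exists>P \<pi> lm. part X X P \<epsilon> \<and> cyc P \<pi> lm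
        \<and> (\<forall>Q\<in>P. \<forall>x\<in>Q. F x \<in> \<pi> Q) \<and> (\<forall>Q\<in>P. \<exists>q\<in>Q. (F ^^ lm Q) q = q)"
  shows "topologically_stable X F"
  unfolding topologically_stable_def
proof (intro allI impI)
  fix \<epsilon> :: real assume e: "\<epsilon> > 0"
  obtain P \<pi> lm where P: "part X X P \<epsilon>" and cy: "cyc P \<pi> lm"
    and Fm: "\<forall>Q\<in>P. \<forall>x\<in>Q. F x \<in> \<pi> Q" and per: "\<forall>Q\<in>P. \<exists>q\<in>Q. (F ^^ lm Q) q = q"
    using crit[OF e] by blast
  interpret cyc P \<pi> lm by (rule cy)
  obtain q where q: "\<And>Q. Q \<in> P \<Longrightarrow> q Q \<in> Q \<and> (F ^^ lm Q) (q Q) = q Q"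
    using per by metis
  obtain p where p: "\<forall>Q\<in>P. p Q \<in> Q \<and> F (p Q) = p (\<pi> Q)"
    using section_exists[where mem="\<lambda>x Q. x \<in> Q" and F=F and q=q] Fm q by blast
  have finP: "finite P" and Pprop: "\<And>Q. Q \<in> P \<Longrightarrow> clp X Q \<and> Q \<noteq> {} \<and> diameter Q < \<epsilon> \<and> bounded Q"
    and UP: "\<Union>P = X"
    using P by (auto simp: part_def)
  have cpt: "Q \<in> P \<Longrightarrow> compact Q" for Q using Pprop clp_compact X(1) by blast
  have disj: "Q \<in> P \<Longrightarrow> R \<in> P \<Longrightarrow> Q \<noteq> R \<Longrightarrow> Q \<inter> R = {}" for Q R
    using P unfolding part_def pairwise_def disjnt_def by blast
  define D where "D = (\<lambda>(A, B). setdist A B) ` {(A, B). A \<in> P \<and> B \<in> P \<and> A \<noteq> B}"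
  have finD: "finite D" unfolding D_def
    by (rule finite_imageI, rule finite_subset[of _ "P \<times> P"]) (use finP in auto)
  define \<delta> where "\<delta> = Min (insert 1 D)"
  have Dpos: "d \<in> D \<Longrightarrow> d > 0" for d
  proof -
    assume "d \<in> D"
    then obtain A B where AB: "A \<in> P" "B \<in> P" "A \<noteq> B" "d = setdist A B" unfolding D_def by auto
    show "d > 0" using setdist_pos_compact[OF cpt[OF AB(1)] cpt[OF AB(2)]] Pprop AB disj by auto
  qed
  have dpos: "\<delta> > 0" unfolding \<delta>_def using finD Dpos by (simp add: Min_gr_iff)
  have dle: "A \<in> P \<Longrightarrow> B \<in> P \<Longrightarrow> A \<noteq> B \<Longrightarrow> \<delta> \<le> setdist A B" for A B
    unfolding \<delta>_def using finD by (intro Min_le) (auto simp: D_def)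
  define pc where "pc x = (THE Q. Q \<in> P \<and> x \<in> Q)" for x
  have pc: "x \<in> X \<Longrightarrow> pc x \<in> P \<and> x \<in> pc x" for x
  proof -
    assume "x \<in> X"
    then obtain Q where Q: "Q \<in> P" "x \<in> Q" using UP by blast
    have "pc x = Q" unfolding pc_def
      by (rule the_equality) (use Q part_unique[OF P] in auto)
    then show ?thesis using Q by simp
  qed
  have pcu: "Q \<in> P \<Longrightarrow> x \<in> Q \<Longrightarrow> pc x = Q" for Q x
    unfolding pc_def by (rule the_equality) (use part_unique[OF P] in auto)
  have QX: "Q \<in> P \<Longrightarrow> Q \<subseteq> X" for Q using UP by blast
  show "\<exists>\<delta>>0. \<forall>g\<in>homeos X. Dist_H X F g < \<delta> \<longrightarrow>
          (\<exists>h. continuous_on X h \<and> h ` X \<subseteq> X \<and> dC0 X h id < \<epsilon> \<and> (\<forall>x\<in>X. h (g x) = F (h x)))"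
  proof (intro exI[of _ \<delta>] conjI ballI impI)
    show "\<delta> > 0" by (rule dpos)
    fix g assume g: "g \<in> homeos X" and Dg: "Dist_H X F g < \<delta>"
    obtain g' where g': "homeomorphism X X g g'" using homeos_D[OF g] by blast
    obtain F' where F': "homeomorphism X X F F'" using homeos_D[OF F] by blast
    have close: "x \<in> X \<Longrightarrow> dist (F x) (g x) < \<delta>" for x
      using dC0_upper[OF X(1) homeomorphism_cont1[OF F'] homeomorphism_cont1[OF g'], of x]
        Dist_H_ge(1)[of X F g] Dg by linarith
    have gm: "Q \<in> P \<Longrightarrow> x \<in> Q \<Longrightarrow> g x \<in> \<pi> Q" for Q x
    proof (rule ccontr)
      assume Q: "Q \<in> P" "x \<in> Q" and n: "g x \<notin> \<pi> Q"
      have xX: "x \<in> X" using Q QX by blast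
      have "g x \<in> X" using homeo_maps[OF g' xX] .
      then obtain R where R: "R \<in> P" "g x \<in> R" using UP by blast
      have "R \<noteq> \<pi> Q" using R n by blast
      moreover have PQ: "\<pi> Q \<in> P" using maps Q by blast
      ultimately have "\<delta> \<le> setdist R (\<pi> Q)" using dle R by blast
      also have "setdist R (\<pi> Q) \<le> dist (g x) (F x)" using setdist_le_dist[OF R(2)] Fm Q by blast
      also have "\<dots> < \<delta>" using close[OF xX] by (simp add: dist_commute)
      finally show False by simp
    qed
    define h where "h x = p (pc x)" for x
    have cont: "continuous_on X h"
    proof (rule locally_const_continuous)
      fix x assume x: "x \<in> X"
      show "\<exists>U. openin (top_of_set X) U \<and> x \<in> U \<and> (\<forall>y\<in>U. h y = h x)"
      proof (intro exI[of _ "pc x"] conjI ballI)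
        show "openin (top_of_set X) (pc x)" using pc[OF x] Pprop by (auto simp: clp_def)
        show "x \<in> pc x" using pc[OF x] by blast
        fix y assume "y \<in> pc x"
        then have "pc y = pc x" using pcu pc[OF x] by blast
        then show "h y = h x" unfolding h_def by simp
      qed
    qed
    have hX: "h ` X \<subseteq> X"
    proof
      fix y assume "y \<in> h ` X"
      then obtain x where x: "x \<in> X" "y = h x" by blast
      then have "y \<in> pc x" unfolding h_def using p pc[OF x(1)] by blast
      then show "y \<in> X" using QX pc[OF x(1)] by blast
    qed
    define M where "M = Max (diameter ` P)"
    have "P \<noteq> {}" using UP X(2) by blast
    then have Mlt: "M < \<epsilon>" unfolding M_def using finP Pprop by (simp add: Max_less_iff)
    have "dC0 X h id \<le> M"
    proof (rule dC0_le[OF X(2)])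
      fix x assume x: "x \<in> X"
      have "h x \<in> pc x" "x \<in> pc x" unfolding h_def using p pc[OF x] by blast+
      then have "dist (h x) (id x) \<le> diameter (pc x)"
        using diameter_bounded_bound[of "pc x"] Pprop pc[OF x] by simp
      also have "\<dots> \<le> M" unfolding M_def using finP pc[OF x] by simp
      finally show "dist (h x) (id x) \<le> M" .
    qed
    then have "dC0 X h id < \<epsilon>" using Mlt by linarith
    moreover have "\<forall>x\<in>X. h (g x) = F (h x)"
    proof
      fix x assume x: "x \<in> X"
      have "g x \<in> \<pi> (pc x)" using gm pc[OF x] by blast
      moreover have "\<pi> (pc x) \<in> P" using maps pc[OF x] by blast
      ultimately have "pc (g x) = \<pi> (pc x)" using pcu by blast
      then show "h (g x) = F (h x)" unfolding h_def using p pc[OF x] by simp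
    qed
    ultimately show "\<exists>h. continuous_on X h \<and> h ` X \<subseteq> X \<and> dC0 X h id < \<epsilon> \<and> (\<forall>x\<in>X. h (g x) = F (h x))"
      using cont hX by blast
  qed
qed

lemma not_ts_criterion:
  fixes f :: "'a::metric_space \<Rightarrow> 'a"
  assumes f: "f \<in> homeos X"
    and nper: "\<And>x m. x \<in> X \<Longrightarrow> 0 < m \<Longrightarrow> (f ^^ m) x = x \<Longrightarrow> 3 dvd m"
    and pert: "\<And>\<delta>. \<delta> > 0 \<Longrightarrow> \<exists>g\<in>homeos X. Dist_H X f g < \<delta> \<and> (\<exists>x\<in>X. \<exists>m>0. \<not> 3 dvd m \<and> (g ^^ m) x = x)"
  shows "\<not> topologically_stable X f"
proof
  assume "topologically_stable X f"
  then obtain \<delta> where d: "\<delta> > 0" and dp: "\<forall>g\<in>homeos X. Dist_H X f g < \<delta> \<longrightarrow>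
        (\<exists>h. continuous_on X h \<and> h ` X \<subseteq> X \<and> dC0 X h id < 1 \<and> (\<forall>x\<in>X. h (g x) = f (h x)))"
    unfolding topologically_stable_def by (meson zero_less_one)
  obtain g x m where g: "g \<in> homeos X" "Dist_H X f g < \<delta>" and x: "x \<in> X" "m > 0" "\<not> 3 dvd m" "(g ^^ m) x = x"
    using pert[OF d] by blast
  obtain h where h: "h ` X \<subseteq> X" "\<forall>x\<in>X. h (g x) = f (h x)" using dp g by blast
  obtain g' where g': "homeomorphism X X g g'" using homeos_D[OF g(1)] by blast
  have it: "y \<in> X \<Longrightarrow> h ((g ^^ n) y) = (f ^^ n) (h y)" for n y
  proof (induction n)
    case 0 then show ?case by simp
  next
    case (Suc n)
    have "(g ^^ n) y \<in> X" using funpow_maps[of X g y n] homeo_maps[OF g'] Suc.prems by blast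
    then have "h (g ((g ^^ n) y)) = f (h ((g ^^ n) y))" using h(2) by blast
    then show ?case using Suc by simp
  qed
  have "(f ^^ m) (h x) = h x" using it[OF x(1), of m] x(4) by simp
  moreover have "h x \<in> X" using h(1) x(1) by blast
  ultimately have "3 dvd m" using nper x(2) by blast
  then show False using x(3) by simp
qed


lemma funpow_inv_left:
  assumes "\<And>x. x \<in> X \<Longrightarrow> f' (f x) = x" "\<And>x. x \<in> X \<Longrightarrow> f x \<in> X" "x \<in> X"
  shows "(f' ^^ k) ((f ^^ k) x) = x"
  using assms(3)
proof (induction k arbitrary: x)
  case 0 then show ?case by simp
next
  case (Suc k)
  have e1: "(f ^^ Suc k) x = f ((f ^^ k) x)" by simp
  have e2: "(f' ^^ Suc k) y = (f' ^^ k) (f' y)" for y by (simp only: funpow_Suc_right o_apply)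
  have "(f' ^^ Suc k) ((f ^^ Suc k) x) = (f' ^^ k) (f' (f ((f ^^ k) x)))"
    by (simp only: e1 e2)
  also have "f' (f ((f ^^ k) x)) = (f ^^ k) x"
    using assms(1) funpow_maps[of X f x k] assms(2) Suc.prems by blast
  finally show ?case using Suc by simp
qed

lemma perturb:
  fixes f :: "'a::metric_space \<Rightarrow> 'a"
  assumes X: "X \<noteq> {}" and f': "homeomorphism X X f f'"
    and L: "L > 0" and Q0: "clp X Q0" "Q0 \<noteq> {}" and Qe: "clp X Qe"
    and img1: "(f ^^ (L - 1)) ` Q0 = Qe" and img2: "f ` Qe = Q0"
    and avoid: "\<And>x i. x \<in> Q0 \<Longrightarrow> i < L - 1 \<Longrightarrow> (f ^^ i) x \<notin> Qe"
    and diam: "diameter Q0 < \<delta>" "diameter Qe < \<delta>" "bounded Q0" "bounded Qe"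
  shows "\<exists>g\<in>homeos X. Dist_H X f g < \<delta> \<and> (\<exists>x\<in>X. (g ^^ L) x = x)"
proof -
  define k where "k = L - 1"
  have Lk: "L = Suc k" using L k_def by simp
  have fX: "x \<in> X \<Longrightarrow> f x \<in> X" for x using homeo_maps[OF f'] .
  have f'X: "x \<in> X \<Longrightarrow> f' x \<in> X" for x using homeo_maps2[OF f'] .
  have ff': "x \<in> X \<Longrightarrow> f' (f x) = x" for x using homeomorphism_apply1[OF f'] .
  have f'f: "x \<in> X \<Longrightarrow> f (f' x) = x" for x using homeomorphism_apply2[OF f'] .
  have f'f'X: "x \<in> X \<Longrightarrow> (f' ^^ k) x \<in> X" for x using funpow_maps[OF f'X] .
  have fkX: "x \<in> X \<Longrightarrow> (f ^^ k) x \<in> X" for x using funpow_maps[OF fX] .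
  have inv1: "x \<in> X \<Longrightarrow> (f' ^^ k) ((f ^^ k) x) = x" for x by (rule funpow_inv_left[OF ff' fX])
  have inv2: "x \<in> X \<Longrightarrow> (f ^^ k) ((f' ^^ k) x) = x" for x by (rule funpow_inv_left[OF f'f f'X])
  have Q0X: "Q0 \<subseteq> X" and QeX: "Qe \<subseteq> X" using Q0 Qe clp_subset by blast+
  have A: "y \<in> Qe \<Longrightarrow> (f' ^^ k) y \<in> Q0" for y
  proof -
    assume "y \<in> Qe"
    then obtain z where "z \<in> Q0" "y = (f ^^ k) z" using img1 k_def by blast
    then show ?thesis using inv1 Q0X by auto
  qed
  have B: "z \<in> Q0 \<Longrightarrow> (f ^^ k) z \<in> Qe" for z using img1 k_def by blast
  have C: "x \<in> X \<Longrightarrow> f x \<in> Q0 \<Longrightarrow> x \<in> Qe" for x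
  proof -
    assume x: "x \<in> X" "f x \<in> Q0"
    then obtain w where w: "w \<in> Qe" "f x = f w" using img2 by (metis imageE)
    then have "f' (f x) = f' (f w)" by simp
    moreover have "f' (f x) = x" using ff' x(1) by blast
    moreover have "f' (f w) = w" using ff' w(1) QeX by blast
    ultimately show "x \<in> Qe" using w(1) by simp
  qed
  have D: "y \<in> X \<Longrightarrow> y \<notin> Q0 \<Longrightarrow> f' y \<notin> Qe" for y
  proof
    assume y: "y \<in> X" "y \<notin> Q0" "f' y \<in> Qe"
    then have "f (f' y) \<in> Q0" using img2 by blast
    then show False using f'f y by simp
  qed
  have E: "y \<in> Q0 \<Longrightarrow> f' y \<in> Qe" for y
  proof -
    assume "y \<in> Q0"
    then obtain w where "w \<in> Qe" "y = f w" using img2 by blast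
    then show ?thesis using ff' QeX by auto
  qed
  define g where "g x = (if x \<in> Qe then (f' ^^ k) x else f x)" for x
  define g' where "g' y = (if y \<in> Q0 then (f ^^ k) y else f' y)" for y
  have gX: "x \<in> X \<Longrightarrow> g x \<in> X" for x unfolding g_def using f'f'X fX by auto
  have g'X: "x \<in> X \<Longrightarrow> g' x \<in> X" for x unfolding g'_def using fkX f'X by auto
  have gg': "x \<in> X \<Longrightarrow> g' (g x) = x" for x
  proof -
    assume x: "x \<in> X"
    show ?thesis
    proof (cases "x \<in> Qe")
      case True
      then have "g x = (f' ^^ k) x" "(f' ^^ k) x \<in> Q0" unfolding g_def using A by auto
      then show ?thesis unfolding g'_def using inv2 x by simp
    next
      case False
      then have "g x = f x" "f x \<notin> Q0" unfolding g_def using C x by auto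
      then show ?thesis unfolding g'_def using ff' x by simp
    qed
  qed
  have g'g: "y \<in> X \<Longrightarrow> g (g' y) = y" for y
  proof -
    assume y: "y \<in> X"
    show ?thesis
    proof (cases "y \<in> Q0")
      case True
      then have "g' y = (f ^^ k) y" "(f ^^ k) y \<in> Qe" unfolding g'_def using B by auto
      then show ?thesis unfolding g_def using inv1 y by simp
    next
      case False
      then have "g' y = f' y" "f' y \<notin> Qe" unfolding g'_def using D y by auto
      then show ?thesis unfolding g_def using f'f y by simp
    qed
  qed
  have XU: "Qe \<union> (X - Qe) = X" "Q0 \<union> (X - Q0) = X" using QeX Q0X by auto
  have contf: "continuous_on X f" "continuous_on X f'"
    using homeomorphism_cont1[OF f'] homeomorphism_cont2[OF f'] by auto
  have contfk: "continuous_on X (f ^^ k)" "continuous_on X (f' ^^ k)"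
    using continuous_on_funpow[OF contf(1) fX] continuous_on_funpow[OF contf(2) f'X] by auto
  have cg: "continuous_on X g"
  proof -
    have "continuous_on (Qe \<union> (X - Qe)) (\<lambda>x. if x \<in> Qe then (f' ^^ k) x else f x)"
    proof (rule continuous_on_cases_local)
      show "closedin (top_of_set (Qe \<union> (X - Qe))) Qe" using Qe XU by (simp add: clp_def)
      show "closedin (top_of_set (Qe \<union> (X - Qe))) (X - Qe)" using Qe XU by (auto simp: clp_def)
      show "continuous_on Qe (f' ^^ k)" using contfk(2) QeX continuous_on_subset by blast
      show "continuous_on (X - Qe) f" using contf(1) continuous_on_subset by blast
    qed auto
    then show ?thesis unfolding g_def using XU by simp
  qed
  have cg': "continuous_on X g'"
  proof -
    have "continuous_on (Q0 \<union> (X - Q0)) (\<lambda>x. if x \<in> Q0 then (f ^^ k) x else f' x)"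
    proof (rule continuous_on_cases_local)
      show "closedin (top_of_set (Q0 \<union> (X - Q0))) Q0" using Q0 XU by (simp add: clp_def)
      show "closedin (top_of_set (Q0 \<union> (X - Q0))) (X - Q0)" using Q0 XU by (auto simp: clp_def)
      show "continuous_on Q0 (f ^^ k)" using contfk(1) Q0X continuous_on_subset by blast
      show "continuous_on (X - Q0) f'" using contf(2) continuous_on_subset by blast
    qed auto
    then show ?thesis unfolding g'_def using XU by simp
  qed
  have hom: "homeomorphism X X g g'"
  proof -
    have "g ` X = X"
    proof
      show "g ` X \<subseteq> X" using gX by blast
      show "X \<subseteq> g ` X" using g'g g'X by (metis image_eqI subsetI)
    qed
    moreover have "g' ` X = X"
    proof
      show "g' ` X \<subseteq> X" using g'X by blast
      show "X \<subseteq> g' ` X" using gg' gX by (metis image_eqI subsetI)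
    qed
    ultimately show ?thesis unfolding homeomorphism_def using gg' g'g cg cg' by blast
  qed
  then have ghom: "g \<in> homeos X" unfolding homeos_def by blast
  define M where "M = max (diameter Q0) (diameter Qe)"
  have M0: "0 \<le> M" unfolding M_def using diameter_ge_0[OF diam(3)] by simp
  have d1: "dC0 X f g \<le> M"
  proof (rule dC0_le[OF X])
    fix x assume x: "x \<in> X"
    show "dist (f x) (g x) \<le> M"
    proof (cases "x \<in> Qe")
      case True
      then have "f x \<in> Q0" "g x \<in> Q0" unfolding g_def using img2 A by auto
      then have "dist (f x) (g x) \<le> diameter Q0" using diameter_bounded_bound[OF diam(3)] by blast
      then show ?thesis unfolding M_def by simp
    next
      case False
      then show ?thesis unfolding g_def using M0 by simp
    qed
  qed
  have d2: "dC0 X (inv_into X f) (inv_into X g) \<le> M"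
  proof (rule dC0_le[OF X])
    fix y assume y: "y \<in> X"
    have iv: "inv_into X f y = f' y" "inv_into X g y = g' y"
      using homeo_inv_into[OF f' y] homeo_inv_into[OF hom y] by auto
    show "dist (inv_into X f y) (inv_into X g y) \<le> M"
    proof (cases "y \<in> Q0")
      case True
      then have "f' y \<in> Qe" "g' y \<in> Qe" unfolding g'_def using E B by auto
      then have "dist (f' y) (g' y) \<le> diameter Qe" using diameter_bounded_bound[OF diam(4)] by blast
      then show ?thesis unfolding M_def iv by simp
    next
      case False
      then show ?thesis unfolding g'_def iv using M0 by simp
    qed
  qed
  have "Dist_H X f g \<le> M" unfolding Dist_H_def using d1 d2 by simp
  moreover have "M < \<delta>" unfolding M_def using diam by simp
  ultimately have close: "Dist_H X f g < \<delta>" by linarith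
  obtain x0 where x0: "x0 \<in> Q0" using Q0(2) by blast
  have x0X: "x0 \<in> X" using x0 Q0X by blast
  have iter: "i \<le> k \<Longrightarrow> (g ^^ i) x0 = (f ^^ i) x0" for i
  proof (induction i)
    case 0 then show ?case by simp
  next
    case (Suc i)
    then have "i < k" by simp
    then have "(f ^^ i) x0 \<notin> Qe" using avoid[OF x0] k_def by blast
    then have "g ((f ^^ i) x0) = f ((f ^^ i) x0)" unfolding g_def by simp
    then show ?case using Suc by simp
  qed
  have "(g ^^ L) x0 = g ((g ^^ k) x0)" using Lk by simp
  also have "\<dots> = g ((f ^^ k) x0)" using iter by simp
  also have "\<dots> = (f' ^^ k) ((f ^^ k) x0)" unfolding g_def using B[OF x0] by simp
  also have "\<dots> = x0" using inv1 x0X by simp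
  finally show ?thesis using ghom close x0X by blast
qed


definition tau :: "nat \<Rightarrow> nat \<Rightarrow> nat" where
  "tau B i = (if i < B then Suc i mod B else B + Suc (i - B) mod 3)"

lemma tau_iter:
  assumes "i < B + 3"
  shows "(tau B ^^ m) i = (if i < B then (i + m) mod B else B + (i - B + m) mod 3)"
proof (induction m)
  case 0
  show ?case using assms by auto
next
  case (Suc m)
  show ?case
  proof (cases "i < B")
    case True
    then have B: "B > 0" by simp
    have "(tau B ^^ Suc m) i = tau B ((i + m) mod B)" using Suc True by simp
    also have "\<dots> = Suc ((i + m) mod B) mod B" unfolding tau_def using B by simp
    also have "\<dots> = (i + Suc m) mod B" by (simp add: mod_Suc_eq)
    finally show ?thesis using True by simp
  next
    case False
    have "(tau B ^^ Suc m) i = tau B (B + (i - B + m) mod 3)" using Suc False by simp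
    also have "\<dots> = B + Suc ((i - B + m) mod 3) mod 3" unfolding tau_def by simp
    also have "\<dots> = B + (i - B + Suc m) mod 3" by (simp add: mod_Suc_eq)
    finally show ?thesis using False by simp
  qed
qed

lemma shift_fix: "a < N \<Longrightarrow> (a + m) mod N = a \<longleftrightarrow> N dvd m"
  for a m N :: nat
proof -
  assume a: "a < N"
  have "(a + m) mod N = a mod N \<longleftrightarrow> N dvd (a + m - a)"
    by (rule mod_eq_dvd_iff_nat) simp
  then show ?thesis using a by simp
qed

lemma tau_fix:
  assumes "i < B + 3"
  shows "(tau B ^^ m) i = i \<longleftrightarrow> (if i < B then B else 3) dvd m"
proof (cases "i < B")
  case True
  then show ?thesis using tau_iter[OF assms] shift_fix[OF True] by simp
next
  case False
  then have r: "i - B < 3" using assms by simp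
  have "(tau B ^^ m) i = i \<longleftrightarrow> (i - B + m) mod 3 = i - B"
    using tau_iter[OF assms] False by auto
  also have "\<dots> \<longleftrightarrow> 3 dvd m" by (rule shift_fix[OF r])
  finally show ?thesis using False by simp
qed

lemma tau_lt: "i < B + 3 \<Longrightarrow> tau B i < B + 3"
proof (cases "i < B")
  case True
  then have "Suc i mod B < B" by simp
  moreover have "tau B i = Suc i mod B" unfolding tau_def using True by simp
  ultimately show ?thesis by linarith
qed (simp add: tau_def)

lemma tau_inj:
  assumes "i < B + 3" "j < B + 3" "tau B i = tau B j" "B > 0"
  shows "i = j"
proof -
  define k where "k = 3 * B - 1"
  have eq: "3 * B = Suc k" unfolding k_def using assms(4) by simp
  have sh: "(tau B ^^ (3 * B)) x = (tau B ^^ k) (tau B x)" for x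
    unfolding eq by (simp only: funpow_Suc_right o_apply)
  have fi: "(tau B ^^ (3 * B)) i = i"
  proof -
    have "(if i < B then B else 3) dvd 3 * B" by simp
    then show ?thesis using tau_fix[OF assms(1), of "3 * B"] by blast
  qed
  have fj: "(tau B ^^ (3 * B)) j = j"
  proof -
    have "(if j < B then B else 3) dvd 3 * B" by simp
    then show ?thesis using tau_fix[OF assms(2), of "3 * B"] by blast
  qed
  have "i = (tau B ^^ k) (tau B i)" using fi sh[of i] by simp
  also have "\<dots> = (tau B ^^ k) (tau B j)" using assms(3) by (rule arg_cong)
  also have "\<dots> = j" using fj sh[of j] by simp
  finally show ?thesis .
qed

lemma not3_coprime:
  fixes a :: nat
  assumes "\<not> 3 dvd a"
  shows "coprime a 3"
proof -
  have d: "gcd a 3 dvd 3" by simp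
  then have "gcd a 3 \<le> 3" by (rule dvd_imp_le) simp
  moreover have "gcd a 3 > 0" by simp
  moreover have "gcd a 3 \<noteq> 2"
  proof
    assume "gcd a 3 = 2"
    then have "(2::nat) dvd 3" using d by simp
    then show False by simp
  qed
  moreover have "gcd a 3 \<noteq> 3" using assms by (metis gcd_dvd1)
  ultimately have "gcd a 3 = 1" by linarith
  then show ?thesis by (simp add: coprime_iff_gcd_eq_1)
qed

lemma lcm_3: "\<not> 3 dvd (a::nat) \<Longrightarrow> lcm a 3 = 3 * a"
  using lcm_coprime[OF not3_coprime] by simp

lemma not3_lcm:
  fixes a b :: nat
  assumes "\<not> 3 dvd a" "\<not> 3 dvd b"
  shows "\<not> 3 dvd lcm a b"
proof
  assume "3 dvd lcm a b"
  moreover have "lcm a b dvd a * b" by (simp add: lcm_least)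
  ultimately have "3 dvd a * b" using dvd_trans by blast
  moreover have "coprime 3 a" using not3_coprime[OF assms(1)] by (simp add: coprime_commute)
  ultimately have "3 dvd b" using coprime_dvd_mult_right_iff by blast
  then show False using assms(2) by simp
qed

lemma not3_dvd3:
  fixes l m :: nat
  assumes "\<not> 3 dvd l"
  shows "l dvd 3 * m \<longleftrightarrow> l dvd m"
  using coprime_dvd_mult_right_iff[OF not3_coprime[OF assms]] by simp


definition valid :: "'a::metric_space set \<Rightarrow> nat \<Rightarrow> 'a set set \<Rightarrow> ('a set \<Rightarrow> 'a set) \<Rightarrow> ('a set \<Rightarrow> nat) \<Rightarrow> bool" where
  "valid X n P \<sigma> ll \<longleftrightarrow> part X X P (1 / real (Suc n)) \<and> cyc P \<sigma> ll
     \<and> (\<forall>Q\<in>P. \<not> 3 dvd ll Q \<longrightarrow> Suc n \<le> ll Q) \<and> (\<exists>Q\<in>P. \<not> 3 dvd ll Q)"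

definition rel :: "'a set set \<Rightarrow> ('a set \<Rightarrow> 'a set) \<Rightarrow> ('a set \<Rightarrow> nat) \<Rightarrow>
    'a set set \<Rightarrow> ('a set \<Rightarrow> 'a set) \<Rightarrow> ('a set \<Rightarrow> nat) \<Rightarrow> bool" where
  "rel P \<sigma> ll P' \<sigma>' ll' \<longleftrightarrow> (\<forall>Q'\<in>P'. \<exists>Q\<in>P. Q' \<subseteq> Q)
     \<and> (\<forall>Q'\<in>P'. \<forall>Q\<in>P. Q' \<subseteq> Q \<longrightarrow> \<sigma>' Q' \<subseteq> \<sigma> Q)
     \<and> (\<forall>Q'\<in>P'. \<forall>Q\<in>P. Q' \<subseteq> Q \<longrightarrow> 3 dvd ll Q \<longrightarrow> ll' Q' = ll Q)
     \<and> (\<forall>Q\<in>P. \<not> 3 dvd ll Q \<longrightarrow> (\<exists>Q'\<in>P'. Q' \<subseteq> Q \<and> ll' Q' = 3 * ll Q))"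

lemma step:
  assumes cs: "cantor_space X" and v: "valid X n P \<sigma> ll"
  shows "\<exists>P' \<sigma>' ll'. valid X (Suc n) P' \<sigma>' ll' \<and> rel P \<sigma> ll P' \<sigma>' ll'"
proof -
  have pP: "part X X P (1 / real (Suc n))" and cy: "cyc P \<sigma> ll"
    and V3: "\<forall>Q\<in>P. \<not> 3 dvd ll Q \<longrightarrow> Suc n \<le> ll Q" and V4: "\<exists>Q\<in>P. \<not> 3 dvd ll Q"
    using v unfolding valid_def by auto
  interpret cyc P \<sigma> ll by (rule cy)
  have finP: "finite P" and Pp: "\<And>Q. Q \<in> P \<Longrightarrow> clp X Q \<and> Q \<noteq> {}" and UP: "\<Union>P = X"
    using pP unfolding part_def by auto
  define e' where "e' = 1 / real (Suc (Suc n))"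
  have e'0: "e' > 0" unfolding e'_def by simp
  have "\<forall>Q\<in>P. \<exists>N. \<forall>c\<ge>N. \<exists>R. part X Q R e' \<and> card R = c"
    using part_card[OF cs _ _ e'0] Pp by blast
  then obtain N where N: "\<And>Q c. Q \<in> P \<Longrightarrow> c \<ge> N Q \<Longrightarrow> \<exists>R. part X Q R e' \<and> card R = c"
    by metis
  have Pne: "P \<noteq> {}" using V4 by blast
  define c0 where "c0 = max (Max (N ` P)) (n + 5)"
  define c where "c = (if 3 dvd c0 then Suc c0 else c0)"
  have cN: "Q \<in> P \<Longrightarrow> N Q \<le> c" for Q
  proof -
    assume "Q \<in> P"
    then have "N Q \<le> Max (N ` P)" using finP by simp
    then show ?thesis unfolding c_def c0_def by auto
  qed
  have c5: "n + 5 \<le> c" unfolding c_def c0_def by auto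
  have c3: "\<not> 3 dvd c" unfolding c_def by presburger
  define B where "B = c - 3"
  have cB: "c = B + 3" using c5 unfolding B_def by simp
  have Bn: "n + 2 \<le> B" using c5 cB by simp
  have B0: "B > 0" using Bn by simp
  have B3: "\<not> 3 dvd B" using c3 cB by presburger
  have "\<forall>Q\<in>P. \<exists>R. part X Q R e' \<and> card R = c" using N cN by blast
  then obtain R where R: "\<And>Q. Q \<in> P \<Longrightarrow> part X Q (R Q) e' \<and> card (R Q) = c" by metis
  have "\<forall>Q\<in>P. \<exists>h. bij_betw h {0..<c} (R Q)"
  proof
    fix Q assume Q: "Q \<in> P"
    have "finite (R Q)" using R[OF Q] unfolding part_def by blast
    then show "\<exists>h. bij_betw h {0..<c} (R Q)" using ex_bij_betw_nat_finite R[OF Q] by metis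
  qed
  then obtain C where C: "\<And>Q. Q \<in> P \<Longrightarrow> bij_betw (C Q) {0..<c} (R Q)" by metis
  have C_in: "Q \<in> P \<Longrightarrow> i < c \<Longrightarrow> C Q i \<in> R Q" for Q i
  proof -
    assume a: "Q \<in> P" "i < c"
    have "C Q ` {0..<c} = R Q" using C[OF a(1)] unfolding bij_betw_def by blast
    then show ?thesis using a(2) by auto
  qed
  have C_props: "Q \<in> P \<Longrightarrow> i < c \<Longrightarrow> clp X (C Q i) \<and> C Q i \<noteq> {} \<and> diameter (C Q i) < e' \<and> bounded (C Q i) \<and> C Q i \<subseteq> Q" for Q i
  proof -
    assume a: "Q \<in> P" "i < c"
    have "part X Q (R Q) e'" using R[OF a(1)] by blast
    then show ?thesis using C_in[OF a] unfolding part_def by blast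
  qed
  have C_cover: "Q \<in> P \<Longrightarrow> (\<Union>i\<in>{0..<c}. C Q i) = Q" for Q
  proof -
    assume Q: "Q \<in> P"
    have "C Q ` {0..<c} = R Q" using C[OF Q] unfolding bij_betw_def by blast
    moreover have "\<Union>(R Q) = Q" using R[OF Q] unfolding part_def by blast
    ultimately show ?thesis by simp
  qed
  have C_inj: "Q \<in> P \<Longrightarrow> Q' \<in> P \<Longrightarrow> i < c \<Longrightarrow> j < c \<Longrightarrow> C Q i = C Q' j \<Longrightarrow> Q = Q' \<and> i = j" for Q Q' i j
  proof -
    assume a: "Q \<in> P" "Q' \<in> P" "i < c" "j < c" "C Q i = C Q' j"
    obtain x where x: "x \<in> C Q i" using C_props[OF a(1,3)] by blast
    have "x \<in> Q" "x \<in> Q'" using x a(5) C_props[OF a(1,3)] C_props[OF a(2,4)] by blast+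
    then have QQ: "Q = Q'" using part_unique[OF pP a(1,2)] by blast
    have "inj_on (C Q) {0..<c}" using C[OF a(1)] unfolding bij_betw_def by blast
    then have "i = j" using a QQ unfolding inj_on_def by auto
    then show ?thesis using QQ by blast
  qed
  have C_disj: "Q \<in> P \<Longrightarrow> Q' \<in> P \<Longrightarrow> i < c \<Longrightarrow> j < c \<Longrightarrow> C Q i \<noteq> C Q' j \<Longrightarrow> C Q i \<inter> C Q' j = {}" for Q Q' i j
  proof -
    assume a: "Q \<in> P" "Q' \<in> P" "i < c" "j < c" "C Q i \<noteq> C Q' j"
    show ?thesis
    proof (cases "Q = Q'")
      case True
      have "part X Q (R Q) e'" using R[OF a(1)] by blast
      moreover have "C Q i \<in> R Q" "C Q j \<in> R Q" using C_in a by auto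
      ultimately show ?thesis using a(5) True unfolding part_def pairwise_def disjnt_def by blast
    next
      case False
      have "Q \<inter> Q' = {}"
      proof (rule ccontr)
        assume "Q \<inter> Q' \<noteq> {}"
        then obtain x where "x \<in> Q" "x \<in> Q'" by blast
        then show False using part_unique[OF pP a(1,2)] False by blast
      qed
      then show ?thesis using C_props[OF a(1,3)] C_props[OF a(2,4)] by blast
    qed
  qed
  define kk where "kk Q i = (if 3 dvd ll Q then 1 else if i < B then B else (3::nat))" for Q i
  define tq where "tq Q = (if 3 dvd ll Q then id else tau B)" for Q
  define P' where "P' = (\<lambda>(Q, i). C Q i) ` (P \<times> {0..<c})"
  have P'_iff: "R' \<in> P' \<longleftrightarrow> (\<exists>Q\<in>P. \<exists>i<c. R' = C Q i)" for R'
  proof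
    assume "R' \<in> P'"
    then obtain Q i where "Q \<in> P" "i \<in> {0..<c}" "R' = C Q i" unfolding P'_def by auto
    then show "\<exists>Q\<in>P. \<exists>i<c. R' = C Q i" by auto
  next
    assume "\<exists>Q\<in>P. \<exists>i<c. R' = C Q i"
    then obtain Q i where "Q \<in> P" "i < c" "R' = C Q i" by blast
    then show "R' \<in> P'" unfolding P'_def by (intro image_eqI[of _ _ "(Q, i)"]) auto
  qed
  define par where "par R' = (THE Q. Q \<in> P \<and> R' \<subseteq> Q)" for R'
  define lbl where "lbl R' = (THE i. i < c \<and> C (par R') i = R')" for R'
  have par_C: "Q \<in> P \<Longrightarrow> i < c \<Longrightarrow> par (C Q i) = Q" for Q i
  proof -
    assume a: "Q \<in> P" "i < c"
    obtain x where x: "x \<in> C Q i" using C_props[OF a] by blast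
    show ?thesis unfolding par_def
    proof (rule the_equality)
      show "Q \<in> P \<and> C Q i \<subseteq> Q" using C_props[OF a] a by blast
      fix Q0 assume "Q0 \<in> P \<and> C Q i \<subseteq> Q0"
      then show "Q0 = Q" using part_unique[OF pP, of Q0 Q x] x C_props[OF a] a by blast
    qed
  qed
  have lbl_C: "Q \<in> P \<Longrightarrow> i < c \<Longrightarrow> lbl (C Q i) = i" for Q i
    unfolding lbl_def par_C
    by (rule the_equality) (auto dest: C_inj)
  define \<sigma>' where "\<sigma>' R' = C (\<sigma> (par R')) (tq (par R') (lbl R'))" for R'
  define ll' where "ll' R' = lcm (ll (par R')) (kk (par R') (lbl R'))" for R'
  have \<sigma>'_C: "Q \<in> P \<Longrightarrow> i < c \<Longrightarrow> \<sigma>' (C Q i) = C (\<sigma> Q) (tq Q i)" for Q i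
    unfolding \<sigma>'_def using par_C lbl_C by simp
  have ll'_C: "Q \<in> P \<Longrightarrow> i < c \<Longrightarrow> ll' (C Q i) = lcm (ll Q) (kk Q i)" for Q i
    unfolding ll'_def using par_C lbl_C by simp
  have tq_lt: "i < c \<Longrightarrow> tq Q i < c" for Q i
    unfolding tq_def using tau_lt[of i B] cB by auto
  have tq_inj: "i < c \<Longrightarrow> j < c \<Longrightarrow> tq Q i = tq Q j \<Longrightarrow> i = j" for Q i j
    unfolding tq_def using tau_inj[of i B j] cB B0 by (auto split: if_splits)
  have tq_iter: "Q \<in> P \<Longrightarrow> tq ((\<sigma> ^^ m) Q) = tq Q" for Q m
    unfolding tq_def using lam_iter by simp
  have kk_iter: "Q \<in> P \<Longrightarrow> kk ((\<sigma> ^^ m) Q) = kk Q" for Q m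
    unfolding kk_def using lam_iter by simp
  have tq_fix: "i < c \<Longrightarrow> (tq Q ^^ m) i = i \<longleftrightarrow> kk Q i dvd m" for Q i m
  proof -
    assume i: "i < c"
    show ?thesis
    proof (cases "3 dvd ll Q")
      case True
      have "(id ^^ m) = (id :: nat \<Rightarrow> nat)" by (induction m) auto
      then show ?thesis unfolding tq_def kk_def using True by simp
    next
      case False
      then have "(tq Q ^^ m) i = (tau B ^^ m) i" "kk Q i = (if i < B then B else 3)"
        unfolding tq_def kk_def by auto
      then show ?thesis using tau_fix[of i B m] i cB by simp
    qed
  qed
  have iter: "Q \<in> P \<Longrightarrow> i < c \<Longrightarrow> (\<sigma>' ^^ m) (C Q i) = C ((\<sigma> ^^ m) Q) ((tq Q ^^ m) i) \<and> (tq Q ^^ m) i < c" for Q i m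
  proof (induction m)
    case 0 then show ?case by simp
  next
    case (Suc m)
    let ?Q = "(\<sigma> ^^ m) Q" and ?i = "(tq Q ^^ m) i"
    have QP: "?Q \<in> P" using pin Suc.prems by blast
    have il: "?i < c" using Suc by blast
    have "(\<sigma>' ^^ Suc m) (C Q i) = \<sigma>' (C ?Q ?i)" using Suc by simp
    also have "\<dots> = C (\<sigma> ?Q) (tq ?Q ?i)" using \<sigma>'_C[OF QP il] .
    also have "tq ?Q = tq Q" using tq_iter Suc.prems by blast
    finally have "(\<sigma>' ^^ Suc m) (C Q i) = C ((\<sigma> ^^ Suc m) Q) ((tq Q ^^ Suc m) i)" by simp
    moreover have "(tq Q ^^ Suc m) i < c" using tq_lt[OF il] by simp
    ultimately show ?case by blast
  qed
  have char: "Q \<in> P \<Longrightarrow> i < c \<Longrightarrow> (\<sigma>' ^^ m) (C Q i) = C Q i \<longleftrightarrow> ll' (C Q i) dvd m" for Q i m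
  proof -
    assume a: "Q \<in> P" "i < c"
    have "(\<sigma>' ^^ m) (C Q i) = C Q i \<longleftrightarrow> C ((\<sigma> ^^ m) Q) ((tq Q ^^ m) i) = C Q i"
      using iter[OF a] by simp
    also have "\<dots> \<longleftrightarrow> (\<sigma> ^^ m) Q = Q \<and> (tq Q ^^ m) i = i"
    proof
      assume "C ((\<sigma> ^^ m) Q) ((tq Q ^^ m) i) = C Q i"
      then show "(\<sigma> ^^ m) Q = Q \<and> (tq Q ^^ m) i = i"
        using C_inj[of "(\<sigma> ^^ m) Q" Q "(tq Q ^^ m) i" i] pin[OF a(1), of m] iter[OF a, of m] a by blast
    qed simp
    also have "\<dots> \<longleftrightarrow> ll Q dvd m \<and> kk Q i dvd m"
      using lam_char[OF a(1)] tq_fix[OF a(2)] by simp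
    also have "\<dots> \<longleftrightarrow> ll' (C Q i) dvd m" using ll'_C[OF a] by simp
    finally show ?thesis .
  qed
  have kk_pos: "kk Q i > 0" for Q i unfolding kk_def using B0 by simp
  have part': "part X X P' (1 / real (Suc (Suc n)))"
    unfolding part_def
  proof (intro conjI)
    show "finite P'" unfolding P'_def using finP by simp
  next
    show "\<forall>R'\<in>P'. clp X R' \<and> R' \<noteq> {} \<and> diameter R' < 1 / real (Suc (Suc n)) \<and> bounded R'"
    proof
      fix R' assume "R' \<in> P'"
      then obtain Q i where "Q \<in> P" "i < c" "R' = C Q i" using P'_iff by blast
      then show "clp X R' \<and> R' \<noteq> {} \<and> diameter R' < 1 / real (Suc (Suc n)) \<and> bounded R'"
        using C_props e'_def by blast
    qed
  next
    show "\<Union>P' = X"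
    proof
      show "\<Union>P' \<subseteq> X" using P'_iff C_props UP by blast
      show "X \<subseteq> \<Union>P'"
      proof
        fix x assume "x \<in> X"
        then obtain Q where Q: "Q \<in> P" "x \<in> Q" using UP by blast
        then have "x \<in> (\<Union>i\<in>{0..<c}. C Q i)" using C_cover[OF Q(1)] by simp
        then obtain i where "i < c" "x \<in> C Q i" by auto
        then show "x \<in> \<Union>P'" using P'_iff Q by blast
      qed
    qed
  next
    show "pairwise disjnt P'"
      unfolding pairwise_def disjnt_def
    proof (intro ballI impI)
      fix R1 R2 assume "R1 \<in> P'" "R2 \<in> P'" "R1 \<noteq> R2"
      then show "R1 \<inter> R2 = {}" using P'_iff C_disj by metis
    qed
  qed
  have cyc': "cyc P' \<sigma>' ll'"
  proof
    show "\<forall>R'\<in>P'. \<sigma>' R' \<in> P'"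
    proof
      fix R' assume "R' \<in> P'"
      then obtain Q i where a: "Q \<in> P" "i < c" "R' = C Q i" using P'_iff by blast
      then have "\<sigma>' R' = C (\<sigma> Q) (tq Q i)" using \<sigma>'_C by blast
      moreover have "\<sigma> Q \<in> P" using maps a by blast
      ultimately show "\<sigma>' R' \<in> P'" using P'_iff tq_lt[OF a(2)] by blast
    qed
    show "inj_on \<sigma>' P'"
    proof (rule inj_onI)
      fix R1 R2 assume r: "R1 \<in> P'" "R2 \<in> P'" "\<sigma>' R1 = \<sigma>' R2"
      obtain Q i where a: "Q \<in> P" "i < c" "R1 = C Q i" using r(1) P'_iff by blast
      obtain Q' j where b: "Q' \<in> P" "j < c" "R2 = C Q' j" using r(2) P'_iff by blast
      have "C (\<sigma> Q) (tq Q i) = C (\<sigma> Q') (tq Q' j)" using r(3) a b \<sigma>'_C by simp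
      moreover have "\<sigma> Q \<in> P" "\<sigma> Q' \<in> P" using maps a b by auto
      ultimately have e: "\<sigma> Q = \<sigma> Q'" "tq Q i = tq Q' j"
        using C_inj tq_lt a(2) b(2) by blast+
      have QQ: "Q = Q'" using e(1) inj a(1) b(1) unfolding inj_on_def by blast
      then have "i = j" using e(2) tq_inj a(2) b(2) by blast
      then show "R1 = R2" using a b QQ by simp
    qed
    show "\<forall>R'\<in>P'. 0 < ll' R' \<and> (\<forall>m. (\<sigma>' ^^ m) R' = R' \<longleftrightarrow> ll' R' dvd m)"
    proof
      fix R' assume "R' \<in> P'"
      then obtain Q i where a: "Q \<in> P" "i < c" "R' = C Q i" using P'_iff by blast
      have "0 < ll' R'" using ll'_C[OF a(1,2)] a(3) lcm_pos_nat[OF lam_pos[OF a(1)] kk_pos] by simp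
      then show "0 < ll' R' \<and> (\<forall>m. (\<sigma>' ^^ m) R' = R' \<longleftrightarrow> ll' R' dvd m)"
        using char[OF a(1,2)] a(3) by simp
    qed
  qed
  have V3': "\<forall>R'\<in>P'. \<not> 3 dvd ll' R' \<longrightarrow> Suc (Suc n) \<le> ll' R'"
  proof (intro ballI impI)
    fix R' assume R': "R' \<in> P'" "\<not> 3 dvd ll' R'"
    then obtain Q i where a: "Q \<in> P" "i < c" "R' = C Q i" using P'_iff by blast
    have l: "ll' R' = lcm (ll Q) (kk Q i)" using ll'_C[OF a(1,2)] a(3) by simp
    have n3: "\<not> 3 dvd ll Q"
    proof
      assume "3 dvd ll Q"
      then have "ll' R' = ll Q" using l unfolding kk_def by simp
      then show False using R'(2) \<open>3 dvd ll Q\<close> by simp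
    qed
    have iB: "i < B"
    proof (rule ccontr)
      assume "\<not> i < B"
      then have "kk Q i = 3" unfolding kk_def using n3 by simp
      then have "3 dvd ll' R'" using l by simp
      then show False using R'(2) by simp
    qed
    then have "ll' R' = lcm (ll Q) B" using l n3 unfolding kk_def by simp
    moreover have "B \<le> lcm (ll Q) B" using lcm_pos_nat[OF lam_pos[OF a(1)] B0] by (intro dvd_imp_le) auto
    ultimately show "Suc (Suc n) \<le> ll' R'" using Bn by simp
  qed
  have V4': "\<exists>R'\<in>P'. \<not> 3 dvd ll' R'"
  proof -
    obtain Q where Q: "Q \<in> P" "\<not> 3 dvd ll Q" using V4 by blast
    have c0: "0 < c" using cB by simp
    have "ll' (C Q 0) = lcm (ll Q) B" using ll'_C[OF Q(1) c0] Q(2) B0 unfolding kk_def by simp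
    then have "\<not> 3 dvd ll' (C Q 0)" using not3_lcm[OF Q(2) B3] by simp
    moreover have "C Q 0 \<in> P'" using P'_iff Q(1) c0 by blast
    ultimately show ?thesis by blast
  qed
  have valid': "valid X (Suc n) P' \<sigma>' ll'"
    unfolding valid_def using part' cyc' V3' V4' by blast
  have rel': "rel P \<sigma> ll P' \<sigma>' ll'"
    unfolding rel_def
  proof (intro conjI ballI impI)
    fix R' assume "R' \<in> P'"
    then obtain Q i where a: "Q \<in> P" "i < c" "R' = C Q i" using P'_iff by blast
    then show "\<exists>Q\<in>P. R' \<subseteq> Q" using C_props by blast
  next
    fix R' Q0 assume r: "R' \<in> P'" "Q0 \<in> P" "R' \<subseteq> Q0"
    obtain Q i where a: "Q \<in> P" "i < c" "R' = C Q i" using r(1) P'_iff by blast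
    obtain x where x: "x \<in> R'" using C_props[OF a(1,2)] a(3) by blast
    have "Q0 = Q" using part_unique[OF pP r(2) a(1), of x] x r(3) C_props[OF a(1,2)] a(3) by blast
    then show "\<sigma>' R' \<subseteq> \<sigma> Q0" using \<sigma>'_C[OF a(1,2)] a(3) C_props[OF _ tq_lt[OF a(2)], of "\<sigma> Q"] maps a(1)
      by simp
  next
    fix R' Q0 assume r: "R' \<in> P'" "Q0 \<in> P" "R' \<subseteq> Q0" "3 dvd ll Q0"
    obtain Q i where a: "Q \<in> P" "i < c" "R' = C Q i" using r(1) P'_iff by blast
    obtain x where x: "x \<in> R'" using C_props[OF a(1,2)] a(3) by blast
    have QQ: "Q0 = Q" using part_unique[OF pP r(2) a(1), of x] x r(3) C_props[OF a(1,2)] a(3) by blast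
    then show "ll' R' = ll Q0" using ll'_C[OF a(1,2)] a(3) r(4) unfolding kk_def by simp
  next
    fix Q assume Q: "Q \<in> P" "\<not> 3 dvd ll Q"
    have Bc: "B < c" using cB by simp
    have "ll' (C Q B) = 3 * ll Q" using ll'_C[OF Q(1) Bc] Q(2) lcm_3[OF Q(2)] unfolding kk_def by simp
    moreover have "C Q B \<in> P'" using P'_iff Q(1) Bc by blast
    moreover have "C Q B \<subseteq> Q" using C_props[OF Q(1) Bc] by blast
    ultimately show "\<exists>Q'\<in>P'. Q' \<subseteq> Q \<and> ll' Q' = 3 * ll Q" by blast
  qed
  show ?thesis using valid' rel' by blast
qed


definition lev :: "'a::metric_space set \<Rightarrow> nat \<Rightarrow> ('a set set \<times> ('a set \<Rightarrow> 'a set) \<times> ('a set \<Rightarrow> nat))" where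
  "lev X = rec_nat (SOME S. valid X 0 (fst S) (fst (snd S)) (snd (snd S)))
     (\<lambda>n S. SOME S'. valid X (Suc n) (fst S') (fst (snd S')) (snd (snd S'))
          \<and> rel (fst S) (fst (snd S)) (snd (snd S)) (fst S') (fst (snd S')) (snd (snd S')))"

lemma clp_self: "clp X X"
  unfolding clp_def by (metis closedin_topspace openin_topspace topspace_euclidean_subtopology)

lemma base:
  assumes cs: "cantor_space X"
  shows "\<exists>P \<sigma> l. valid X 0 P \<sigma> l"
proof -
  obtain P where P: "part X X P 1" using part_exists[OF cs clp_self] by force
  have P1: "part X X P (1 / real (Suc 0))" using P by simp
  have cy: "cyc P id (\<lambda>_. 1)"
    by unfold_locales auto
  have "X \<noteq> {}" using cs by (simp add: cantor_space_def)
  then have "P \<noteq> {}" using P unfolding part_def by auto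
  then have "\<exists>Q\<in>P. \<not> 3 dvd (1::nat)" by auto
  then show ?thesis unfolding valid_def using P1 cy by (intro exI[of _ P] exI[of _ id] exI[of _ "\<lambda>_. 1"]) auto
qed

lemma lev_0: "lev X 0 = (SOME S. valid X 0 (fst S) (fst (snd S)) (snd (snd S)))"
  unfolding lev_def by simp

lemma lev_Suc: "lev X (Suc n) = (SOME S'. valid X (Suc n) (fst S') (fst (snd S')) (snd (snd S'))
          \<and> rel (fst (lev X n)) (fst (snd (lev X n))) (snd (snd (lev X n))) (fst S') (fst (snd S')) (snd (snd S')))"
  unfolding lev_def by simp

lemma lev_valid:
  assumes cs: "cantor_space X"
  shows "valid X n (fst (lev X n)) (fst (snd (lev X n))) (snd (snd (lev X n)))"
proof (induction n)
  case 0
  obtain P \<sigma> l where "valid X 0 P \<sigma> l" using base[OF cs] by blast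
  then have "\<exists>S. valid X 0 (fst S) (fst (snd S)) (snd (snd S))" by (intro exI[of _ "(P, \<sigma>, l)"]) simp
  then show ?case unfolding lev_0 by (rule someI_ex)
next
  case (Suc n)
  obtain P \<sigma> l where "valid X (Suc n) P \<sigma> l \<and> rel (fst (lev X n)) (fst (snd (lev X n))) (snd (snd (lev X n))) P \<sigma> l"
    using step[OF cs Suc] by blast
  then have "\<exists>S'. valid X (Suc n) (fst S') (fst (snd S')) (snd (snd S'))
          \<and> rel (fst (lev X n)) (fst (snd (lev X n))) (snd (snd (lev X n))) (fst S') (fst (snd S')) (snd (snd S'))"
    by (intro exI[of _ "(P, \<sigma>, l)"]) simp
  then show ?case unfolding lev_Suc by (rule someI_ex[THEN conjunct1])
qed

lemma lev_rel:
  assumes cs: "cantor_space X"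
  shows "rel (fst (lev X n)) (fst (snd (lev X n))) (snd (snd (lev X n)))
             (fst (lev X (Suc n))) (fst (snd (lev X (Suc n)))) (snd (snd (lev X (Suc n))))"
proof -
  obtain P \<sigma> l where "valid X (Suc n) P \<sigma> l \<and> rel (fst (lev X n)) (fst (snd (lev X n))) (snd (snd (lev X n))) P \<sigma> l"
    using step[OF cs lev_valid[OF cs]] by blast
  then have "\<exists>S'. valid X (Suc n) (fst S') (fst (snd S')) (snd (snd S'))
          \<and> rel (fst (lev X n)) (fst (snd (lev X n))) (snd (snd (lev X n))) (fst S') (fst (snd S')) (snd (snd S'))"
    by (intro exI[of _ "(P, \<sigma>, l)"]) simp
  then show ?thesis unfolding lev_Suc by (rule someI_ex[THEN conjunct2])
qed

locale cantor_ctx =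
  fixes X :: "'a::metric_space set"
  assumes cs: "cantor_space X"
begin

definition PP :: "nat \<Rightarrow> 'a set set" where "PP n = fst (lev X n)"
definition sg :: "nat \<Rightarrow> 'a set \<Rightarrow> 'a set" where "sg n = fst (snd (lev X n))"
definition lv :: "nat \<Rightarrow> 'a set \<Rightarrow> nat" where "lv n = snd (snd (lev X n))"

lemma cX: "compact X" and neX: "X \<noteq> {}" using cs by (auto simp: cantor_space_def)

lemma V: "valid X n (PP n) (sg n) (lv n)"
  unfolding PP_def sg_def lv_def by (rule lev_valid[OF cs])

lemma Rl: "rel (PP n) (sg n) (lv n) (PP (Suc n)) (sg (Suc n)) (lv (Suc n))"
  unfolding PP_def sg_def lv_def by (rule lev_rel[OF cs])

lemma partn: "part X X (PP n) (1 / real (Suc n))" using V unfolding valid_def by blast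
lemma cycn: "cyc (PP n) (sg n) (lv n)" using V unfolding valid_def by blast
lemma V3: "Q \<in> PP n \<Longrightarrow> \<not> 3 dvd lv n Q \<Longrightarrow> Suc n \<le> lv n Q" using V unfolding valid_def by blast
lemma V4: "\<exists>Q\<in>PP n. \<not> 3 dvd lv n Q" using V unfolding valid_def by blast
lemma Rparts:
  "\<forall>Q'\<in>PP (Suc n). \<exists>Q\<in>PP n. Q' \<subseteq> Q"
  "\<forall>Q'\<in>PP (Suc n). \<forall>Q\<in>PP n. Q' \<subseteq> Q \<longrightarrow> sg (Suc n) Q' \<subseteq> sg n Q"
  "\<forall>Q'\<in>PP (Suc n). \<forall>Q\<in>PP n. Q' \<subseteq> Q \<longrightarrow> 3 dvd lv n Q \<longrightarrow> lv (Suc n) Q' = lv n Q"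
  "\<forall>Q\<in>PP n. \<not> 3 dvd lv n Q \<longrightarrow> (\<exists>Q'\<in>PP (Suc n). Q' \<subseteq> Q \<and> lv (Suc n) Q' = 3 * lv n Q)"
proof -
  have r: "rel (PP n) (sg n) (lv n) (PP (Suc n)) (sg (Suc n)) (lv (Suc n))" by (rule Rl)
  note r' = r[unfolded rel_def]
  show "\<forall>Q'\<in>PP (Suc n). \<exists>Q\<in>PP n. Q' \<subseteq> Q" using r' by (rule conjunct1)
  show "\<forall>Q'\<in>PP (Suc n). \<forall>Q\<in>PP n. Q' \<subseteq> Q \<longrightarrow> sg (Suc n) Q' \<subseteq> sg n Q"
    using r' by (rule conjunct1[OF conjunct2])
  show "\<forall>Q'\<in>PP (Suc n). \<forall>Q\<in>PP n. Q' \<subseteq> Q \<longrightarrow> 3 dvd lv n Q \<longrightarrow> lv (Suc n) Q' = lv n Q"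
    using r' by (rule conjunct1[OF conjunct2[OF conjunct2]])
  show "\<forall>Q\<in>PP n. \<not> 3 dvd lv n Q \<longrightarrow> (\<exists>Q'\<in>PP (Suc n). Q' \<subseteq> Q \<and> lv (Suc n) Q' = 3 * lv n Q)"
    using r' by (rule conjunct2[OF conjunct2[OF conjunct2]])
qed

lemma R1: "Q' \<in> PP (Suc n) \<Longrightarrow> \<exists>Q\<in>PP n. Q' \<subseteq> Q"
  using Rparts(1) by (rule bspec)
lemma R2: "Q' \<in> PP (Suc n) \<Longrightarrow> Q \<in> PP n \<Longrightarrow> Q' \<subseteq> Q \<Longrightarrow> sg (Suc n) Q' \<subseteq> sg n Q"
proof -
  assume a: "Q' \<in> PP (Suc n)" "Q \<in> PP n" "Q' \<subseteq> Q"
  from bspec[OF bspec[OF Rparts(2) a(1)] a(2)] show ?thesis using a(3) by (rule mp)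
qed
lemma R3: "Q' \<in> PP (Suc n) \<Longrightarrow> Q \<in> PP n \<Longrightarrow> Q' \<subseteq> Q \<Longrightarrow> 3 dvd lv n Q \<Longrightarrow> lv (Suc n) Q' = lv n Q"
proof -
  assume a: "Q' \<in> PP (Suc n)" "Q \<in> PP n" "Q' \<subseteq> Q" "3 dvd lv n Q"
  from bspec[OF bspec[OF Rparts(3) a(1)] a(2)] have "Q' \<subseteq> Q \<longrightarrow> 3 dvd lv n Q \<longrightarrow> lv (Suc n) Q' = lv n Q" .
  then show ?thesis using a(3,4) by blast
qed
lemma R4: "Q \<in> PP n \<Longrightarrow> \<not> 3 dvd lv n Q \<Longrightarrow> \<exists>Q'\<in>PP (Suc n). Q' \<subseteq> Q \<and> lv (Suc n) Q' = 3 * lv n Q"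
proof -
  assume a: "Q \<in> PP n" "\<not> 3 dvd lv n Q"
  from bspec[OF Rparts(4) a(1)] show ?thesis using a(2) by (rule mp)
qed

lemma maps_n: "Q \<in> PP n \<Longrightarrow> sg n Q \<in> PP n" using cyc.maps[OF cycn] by blast
lemma pin_n: "Q \<in> PP n \<Longrightarrow> (sg n ^^ i) Q \<in> PP n" using cyc.pin[OF cycn] by blast
lemma inj_n: "inj_on (sg n) (PP n)" using cyc.inj[OF cycn] .

lemma piece: "Q \<in> PP n \<Longrightarrow> clp X Q \<and> Q \<noteq> {} \<and> diameter Q < 1 / real (Suc n) \<and> bounded Q"
  using partn unfolding part_def by blast
lemma UPn: "\<Union>(PP n) = X" using partn unfolding part_def by blast
lemma pieceX: "Q \<in> PP n \<Longrightarrow> Q \<subseteq> X" using UPn by blast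
lemma uniq: "Q \<in> PP n \<Longrightarrow> R \<in> PP n \<Longrightarrow> x \<in> Q \<Longrightarrow> x \<in> R \<Longrightarrow> Q = R"
  using part_unique[OF partn] by blast
lemma piece_dist: "Q \<in> PP n \<Longrightarrow> a \<in> Q \<Longrightarrow> b \<in> Q \<Longrightarrow> dist a b < 1 / real (Suc n)"
proof -
  assume a: "Q \<in> PP n" "a \<in> Q" "b \<in> Q"
  have "diameter Q < 1 / real (Suc n)" "bounded Q" using piece[OF a(1)] by auto
  moreover have "dist a b \<le> diameter Q" using diameter_bounded_bound[OF _ a(2,3)] calculation(2) by blast
  ultimately show ?thesis by linarith
qed

definition pc :: "nat \<Rightarrow> 'a \<Rightarrow> 'a set" where "pc n x = (THE Q. Q \<in> PP n \<and> x \<in> Q)"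

lemma pcu: "Q \<in> PP n \<Longrightarrow> x \<in> Q \<Longrightarrow> pc n x = Q"
  unfolding pc_def by (rule the_equality) (use uniq in blast)+

lemma pc: "x \<in> X \<Longrightarrow> pc n x \<in> PP n \<and> x \<in> pc n x"
proof -
  assume "x \<in> X"
  then obtain Q where "Q \<in> PP n" "x \<in> Q" using UPn by blast
  then show ?thesis using pcu by simp
qed

lemma pc_Suc: "x \<in> X \<Longrightarrow> pc (Suc n) x \<subseteq> pc n x"
proof -
  assume x: "x \<in> X"
  obtain Q where Q: "Q \<in> PP n" "pc (Suc n) x \<subseteq> Q" using R1 pc[OF x] by blast
  then have "x \<in> Q" using pc[OF x] by blast
  then have "Q = pc n x" using pcu Q by simp
  then show ?thesis using Q by simp
qed

lemma pc_le: "x \<in> X \<Longrightarrow> m \<le> n \<Longrightarrow> pc n x \<subseteq> pc m x"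
proof -
  assume x: "x \<in> X" and mn: "m \<le> n"
  from mn show ?thesis
  proof (induction n rule: dec_induct)
    case base then show ?case by simp
  next
    case (step k) then show ?case using pc_Suc[OF x, of k] by blast
  qed
qed

definition SS :: "nat \<Rightarrow> 'a \<Rightarrow> 'a set" where "SS n x = sg n (pc n x)"

lemma SS_Suc: "x \<in> X \<Longrightarrow> SS (Suc n) x \<subseteq> SS n x"
  unfolding SS_def using R2 pc pc_Suc by blast

lemma SS_le: "x \<in> X \<Longrightarrow> m \<le> n \<Longrightarrow> SS n x \<subseteq> SS m x"
proof -
  assume x: "x \<in> X" and mn: "m \<le> n"
  from mn show ?thesis
  proof (induction n rule: dec_induct)
    case base then show ?case by simp
  next
    case (step k) then show ?case using SS_Suc[OF x, of k] by blast
  qed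
qed

lemma SS_piece: "x \<in> X \<Longrightarrow> SS n x \<in> PP n"
  unfolding SS_def using maps_n pc by blast

definition ff :: "'a \<Rightarrow> 'a" where "ff x = (SOME y. y \<in> X \<and> (\<forall>n. y \<in> SS n x))"

lemma ff_ex: "x \<in> X \<Longrightarrow> \<exists>y. y \<in> X \<and> (\<forall>n. y \<in> SS n x)"
proof -
  assume x: "x \<in> X"
  have "X \<inter> (\<Inter>n\<in>UNIV. SS n x) \<noteq> {}"
  proof (rule compact_imp_fip_image[OF cX])
    fix n :: nat
    show "closed (SS n x)" using clp_closed[OF cX] piece SS_piece[OF x] by blast
  next
    fix I' :: "nat set" assume I': "finite I'" "I' \<subseteq> UNIV"
    define M where "M = Max (insert 0 I')"
    have "SS M x \<subseteq> SS i x" if "i \<in> I'" for i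
      using SS_le[OF x, of i M] that I'(1) unfolding M_def by simp
    moreover have "SS M x \<noteq> {}" "SS M x \<subseteq> X" using piece pieceX SS_piece[OF x] by blast+
    ultimately show "X \<inter> (\<Inter>i\<in>I'. SS i x) \<noteq> {}" by blast
  qed
  then show ?thesis by blast
qed

lemma ff: "x \<in> X \<Longrightarrow> ff x \<in> X \<and> (\<forall>n. ff x \<in> SS n x)"
  unfolding ff_def using ff_ex by (rule someI_ex) (use ff_ex in blast)

lemma ff_in: "Q \<in> PP n \<Longrightarrow> x \<in> Q \<Longrightarrow> ff x \<in> sg n Q"
proof -
  assume a: "Q \<in> PP n" "x \<in> Q"
  then have x: "x \<in> X" using pieceX by blast
  have "pc n x = Q" using pcu a by simp
  then show ?thesis using ff[OF x] unfolding SS_def by metis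
qed

lemma small: "e > 0 \<Longrightarrow> \<exists>n. 1 / real (Suc n) < e"
  using reals_Archimedean[of e] by (simp add: inverse_eq_divide)

lemma ff_cont: "continuous_on X ff"
  unfolding continuous_on_iff
proof (intro ballI allI impI)
  fix x and e :: real assume x: "x \<in> X" and e: "e > 0"
  obtain n where n: "1 / real (Suc n) < e" using small[OF e] by blast
  have Q: "pc n x \<in> PP n" "x \<in> pc n x" using pc[OF x] by auto
  obtain T where T: "open T" "pc n x = X \<inter> T" using piece[OF Q(1)] unfolding clp_def openin_open by blast
  have xT: "x \<in> T" using T Q by blast
  obtain d where d: "d > 0" "ball x d \<subseteq> T" using T(1) xT unfolding open_contains_ball by blast
  show "\<exists>d>0. \<forall>x'\<in>X. dist x' x < d \<longrightarrow> dist (ff x') (ff x) < e"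
  proof (intro exI[of _ d] conjI ballI impI)
    show "d > 0" by (rule d(1))
    fix y assume y: "y \<in> X" "dist y x < d"
    then have "dist x y < d" by (simp add: dist_commute)
    then have "y \<in> T" using d(2) by (auto simp: mem_ball)
    then have "y \<in> pc n x" using T(2) y(1) by blast
    then have "ff y \<in> sg n (pc n x)" "ff x \<in> sg n (pc n x)" using ff_in Q by blast+
    then have "dist (ff y) (ff x) < 1 / real (Suc n)" using piece_dist maps_n Q(1) by blast
    then show "dist (ff y) (ff x) < e" using n by linarith
  qed
qed

lemma ff_inj: "inj_on ff X"
proof (rule inj_onI)
  fix x y assume x: "x \<in> X" and y: "y \<in> X" and e: "ff x = ff y"
  show "x = y"
  proof (rule ccontr)
    assume "x \<noteq> y"
    then have "dist x y > 0" by simp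
    then obtain n where n: "1 / real (Suc n) < dist x y" using small by blast
    have ne: "pc n x \<noteq> pc n y"
    proof
      assume "pc n x = pc n y"
      then have "dist x y < 1 / real (Suc n)" using piece_dist pc[OF x] pc[OF y] by metis
      then show False using n by simp
    qed
    then have "sg n (pc n x) \<noteq> sg n (pc n y)" using inj_n pc[OF x] pc[OF y] unfolding inj_on_def by blast
    moreover have "ff x \<in> sg n (pc n x)" "ff x \<in> sg n (pc n y)" using ff_in pc x y e by metis+
    ultimately show False using uniq maps_n pc[OF x] pc[OF y] by metis
  qed
qed

lemma sg_surj: "sg n ` PP n = PP n"
  by (rule endo_inj_surj) (use partn maps_n inj_n in \<open>auto simp: part_def\<close>)

lemma ff_surj: "ff ` X = X"
proof
  show "ff ` X \<subseteq> X" using ff by blast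
  show "X \<subseteq> ff ` X"
  proof
    fix y assume y: "y \<in> X"
    have cl: "closed (ff ` X)" using compact_continuous_image[OF ff_cont cX] compact_imp_closed by blast
    have "y \<in> closure (ff ` X)" unfolding closure_approachable
    proof (intro allI impI)
      fix e :: real assume e: "e > 0"
      obtain n where n: "1 / real (Suc n) < e" using small[OF e] by blast
      have "pc n y \<in> sg n ` PP n" using sg_surj pc[OF y] by simp
      then obtain R where R: "R \<in> PP n" "sg n R = pc n y" by blast
      obtain x where x: "x \<in> R" using piece[OF R(1)] by blast
      have "ff x \<in> pc n y" using ff_in[OF R(1) x] R(2) by simp
      then have "dist (ff x) y < 1 / real (Suc n)" using piece_dist pc[OF y] by blast
      moreover have "ff x \<in> ff ` X" using x pieceX R(1) by blast
      ultimately show "\<exists>z\<in>ff ` X. dist z y < e" using n by force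
    qed
    then show "y \<in> ff ` X" using cl by simp
  qed
qed

lemma ff_homeo: "\<exists>g. homeomorphism X X ff g"
  using homeomorphism_compact[OF cX ff_cont ff_surj ff_inj] .

lemma ff_image: "Q \<in> PP n \<Longrightarrow> ff ` Q = sg n Q"
proof
  assume Q: "Q \<in> PP n"
  show "ff ` Q \<subseteq> sg n Q" using ff_in Q by blast
  show "sg n Q \<subseteq> ff ` Q"
  proof
    fix y assume y: "y \<in> sg n Q"
    then have "y \<in> X" using pieceX maps_n Q by blast
    then obtain x where x: "x \<in> X" "y = ff x" using ff_surj by blast
    have "ff x \<in> sg n (pc n x)" using ff_in pc[OF x(1)] by blast
    then have "sg n (pc n x) = sg n Q" using uniq maps_n pc[OF x(1)] Q y x(2) by blast
    then have "pc n x = Q" using inj_n pc[OF x(1)] Q unfolding inj_on_def by blast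
    then show "y \<in> ff ` Q" using pc[OF x(1)] x(2) by blast
  qed
qed

lemma ff_iter_image: "Q \<in> PP n \<Longrightarrow> (ff ^^ i) ` Q = (sg n ^^ i) Q"
proof (induction i)
  case 0 then show ?case by simp
next
  case (Suc i)
  have "(ff ^^ Suc i) ` Q = ff ` ((ff ^^ i) ` Q)" by (simp add: image_comp)
  also have "\<dots> = ff ` ((sg n ^^ i) Q)" using Suc by simp
  also have "\<dots> = sg n ((sg n ^^ i) Q)" using ff_image pin_n Suc.prems by blast
  finally show ?case by simp
qed

lemma ff_iter_in: "Q \<in> PP n \<Longrightarrow> x \<in> Q \<Longrightarrow> (ff ^^ i) x \<in> (sg n ^^ i) Q"
  using ff_iter_image by blast

lemma per3:
  assumes Q: "Q \<in> PP n" "x \<in> Q" "3 dvd lv n Q"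
  shows "(ff ^^ lv n Q) x = x"
proof -
  let ?L = "lv n Q"
  have x: "x \<in> X" using Q pieceX by blast
  have cl: "lv (n + k) (pc (n + k) x) = ?L" for k
  proof (induction k)
    case 0 then show ?case using pcu Q by simp
  next
    case (Suc k)
    have "3 dvd lv (n + k) (pc (n + k) x)" using Suc Q(3) by simp
    then have "lv (Suc (n + k)) (pc (Suc (n + k)) x) = lv (n + k) (pc (n + k) x)"
      using R3[OF pc[OF x, THEN conjunct1] pc[OF x, THEN conjunct1] pc_Suc[OF x]] by blast
    then show ?case using Suc by simp
  qed
  have inn: "(ff ^^ ?L) x \<in> pc (n + k) x" for k
  proof -
    have "(ff ^^ ?L) x \<in> (sg (n + k) ^^ ?L) (pc (n + k) x)" using ff_iter_in pc[OF x] by blast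
    moreover have "(sg (n + k) ^^ ?L) (pc (n + k) x) = pc (n + k) x"
      using cyc.lam_fix[OF cycn pc[OF x, THEN conjunct1]] cl[of k] by metis
    ultimately show ?thesis by simp
  qed
  show ?thesis
  proof (rule ccontr)
    assume ne: "(ff ^^ ?L) x \<noteq> x"
    then have "dist ((ff ^^ ?L) x) x > 0" by simp
    then obtain N where N: "1 / real (Suc N) < dist ((ff ^^ ?L) x) x" using small by blast
    have "dist ((ff ^^ ?L) x) x < 1 / real (Suc (n + N))"
      using piece_dist inn[of N] pc[OF x] by blast
    moreover have "1 / real (Suc (n + N)) \<le> 1 / real (Suc N)"
      by (intro divide_left_mono) auto
    ultimately show False using N by linarith
  qed
qed

lemma noper:
  assumes x: "x \<in> X" and m: "m > 0" "(ff ^^ m) x = x"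
  shows "3 dvd m"
proof -
  let ?Q = "pc m x"
  have Q: "?Q \<in> PP m" "x \<in> ?Q" using pc[OF x] by auto
  have "x \<in> (sg m ^^ m) ?Q" using ff_iter_in[OF Q, of m] m(2) by simp
  then have "(sg m ^^ m) ?Q = ?Q" using uniq pin_n Q by blast
  then have d: "lv m ?Q dvd m" using cyc.lam_char[OF cycn Q(1)] by blast
  show ?thesis
  proof (cases "3 dvd lv m ?Q")
    case True then show ?thesis using d dvd_trans by blast
  next
    case False
    then have "Suc m \<le> lv m ?Q" using V3 Q by blast
    moreover have "lv m ?Q \<le> m" using d m(1) by (rule dvd_imp_le)
    ultimately show ?thesis by simp
  qed
qed

end


lemma part_mono: "part X K P e \<Longrightarrow> e \<le> e' \<Longrightarrow> part X K P e'"
  unfolding part_def by force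

lemma homeo_funpow:
  assumes "homeomorphism X X f g"
  shows "homeomorphism X X (f ^^ n) (g ^^ n)"
proof (induction n)
  case 0
  then show ?case by (simp add: homeomorphism_ident)
next
  case (Suc n)
  have H: "homeomorphism X X (f \<circ> (f ^^ n)) ((g ^^ n) \<circ> g)"
    by (rule homeomorphism_compose[OF Suc assms])
  have E: "g ^^ Suc n = (g ^^ n) \<circ> g" by (rule funpow_Suc_right)
  have E1: "f ^^ Suc n = f \<circ> (f ^^ n)" by (rule funpow.simps(2))
  show ?case unfolding E E1 by (rule H)
qed

lemma inj_on_funpow:
  assumes "inj_on f A" "\<And>x. x \<in> A \<Longrightarrow> f x \<in> A"
  shows "inj_on (f ^^ n) A"
proof (induction n)
  case 0 then show ?case by simp
next
  case (Suc n)
  have "(f ^^ n) ` A \<subseteq> A" using funpow_maps[of A f] assms(2) by blast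
  then have "inj_on f ((f ^^ n) ` A)" using assms(1) inj_on_subset by blast
  then have "inj_on (f \<circ> (f ^^ n)) A" using comp_inj_on[OF Suc] by blast
  then show ?case by (simp only: funpow.simps(2))
qed

context cantor_ctx
begin

lemma ts3: "topologically_stable X (ff ^^ 3)"
proof -
  obtain g where g: "homeomorphism X X ff g" using ff_homeo by blast
  have F: "ff ^^ 3 \<in> homeos X" unfolding homeos_def using homeo_funpow[OF g] by blast
  show ?thesis
  proof (rule ts_criterion[OF cX neX F])
    fix \<epsilon> :: real assume e: "\<epsilon> > 0"
    obtain n where n: "1 / real (Suc n) < \<epsilon>" using small[OF e] by blast
    define lm where "lm Q = (if 3 dvd lv n Q then lv n Q div 3 else lv n Q)" for Q
    have pt: "part X X (PP n) \<epsilon>" using part_mono[OF partn] n by simp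
    have cy: "cyc (PP n) (sg n ^^ 3) lm"
    proof
      show "\<forall>Q\<in>PP n. (sg n ^^ 3) Q \<in> PP n" using pin_n by blast
      show "inj_on (sg n ^^ 3) (PP n)" using inj_on_funpow[OF inj_n maps_n] .
      show "\<forall>Q\<in>PP n. 0 < lm Q \<and> (\<forall>m. ((sg n ^^ 3) ^^ m) Q = Q \<longleftrightarrow> lm Q dvd m)"
      proof (intro ballI conjI allI)
        fix Q assume Q: "Q \<in> PP n"
        have lp: "lv n Q > 0" using cyc.lam_pos[OF cycn Q] .
        show "0 < lm Q"
        proof (cases "3 dvd lv n Q")
          case True
          then obtain t where "lv n Q = 3 * t" by blast
          then show ?thesis unfolding lm_def using lp True by simp
        qed (use lp lm_def in simp)
        fix m
        have "((sg n ^^ 3) ^^ m) Q = Q \<longleftrightarrow> (sg n ^^ (3 * m)) Q = Q" by (simp add: funpow_mult)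
        also have "\<dots> \<longleftrightarrow> lv n Q dvd 3 * m" using cyc.lam_char[OF cycn Q] by blast
        also have "\<dots> \<longleftrightarrow> lm Q dvd m"
        proof (cases "3 dvd lv n Q")
          case True
          then obtain t where t: "lv n Q = 3 * t" by blast
          then show ?thesis unfolding lm_def using True by simp
        next
          case False
          then show ?thesis unfolding lm_def using not3_dvd3[OF False] by simp
        qed
        finally show "((sg n ^^ 3) ^^ m) Q = Q \<longleftrightarrow> lm Q dvd m" .
      qed
    qed
    have Fm: "\<forall>Q\<in>PP n. \<forall>x\<in>Q. (ff ^^ 3) x \<in> (sg n ^^ 3) Q" using ff_iter_in by blast
    have per: "\<forall>Q\<in>PP n. \<exists>q\<in>Q. ((ff ^^ 3) ^^ lm Q) q = q"
    proof
      fix Q assume Q: "Q \<in> PP n"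
      show "\<exists>q\<in>Q. ((ff ^^ 3) ^^ lm Q) q = q"
      proof (cases "3 dvd lv n Q")
        case True
        then obtain t where t: "lv n Q = 3 * t" by blast
        obtain q where q: "q \<in> Q" using piece[OF Q] by blast
        have "((ff ^^ 3) ^^ lm Q) q = (ff ^^ lv n Q) q" unfolding lm_def using True t by (simp add: funpow_mult)
        also have "\<dots> = q" using per3[OF Q q True] .
        finally show ?thesis using q by blast
      next
        case False
        obtain Q' where Q': "Q' \<in> PP (Suc n)" "Q' \<subseteq> Q" "lv (Suc n) Q' = 3 * lv n Q" using R4[OF Q False] by blast
        obtain q where q: "q \<in> Q'" using piece[OF Q'(1)] by blast
        have "((ff ^^ 3) ^^ lm Q) q = (ff ^^ lv (Suc n) Q') q" unfolding lm_def using False Q'(3) by (simp add: funpow_mult)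
        also have "\<dots> = q" using per3[OF Q'(1) q] Q'(3) by simp
        finally show ?thesis using q Q'(2) by blast
      qed
    qed
    show "\<exists>P \<pi> lm. part X X P \<epsilon> \<and> cyc P \<pi> lm \<and> (\<forall>Q\<in>P. \<forall>x\<in>Q. (ff ^^ 3) x \<in> \<pi> Q) \<and> (\<forall>Q\<in>P. \<exists>q\<in>Q. ((ff ^^ 3) ^^ lm Q) q = q)"
      using pt cy Fm per by blast
  qed
qed

lemma not_ts: "\<not> topologically_stable X ff"
proof -
  obtain g where g: "homeomorphism X X ff g" using ff_homeo by blast
  have F: "ff \<in> homeos X" unfolding homeos_def using g by blast
  show ?thesis
  proof (rule not_ts_criterion[OF F])
    fix x m assume "x \<in> X" "0 < m" "(ff ^^ m) x = x"
    then show "3 dvd m" using noper by blast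
  next
    fix \<delta> :: real assume d: "\<delta> > 0"
    obtain n where n: "1 / real (Suc n) < \<delta>" using small[OF d] by blast
    obtain Q where Q: "Q \<in> PP n" "\<not> 3 dvd lv n Q" using V4 by blast
    let ?L = "lv n Q"
    have L0: "?L > 0" using cyc.lam_pos[OF cycn Q(1)] .
    let ?Qe = "(sg n ^^ (?L - 1)) Q"
    have Qe: "?Qe \<in> PP n" using pin_n Q(1) by blast
    have img1: "(ff ^^ (?L - 1)) ` Q = ?Qe" using ff_iter_image[OF Q(1)] .
    have "sg n ?Qe = (sg n ^^ Suc (?L - 1)) Q" by simp
    also have "\<dots> = Q" using L0 cyc.lam_fix[OF cycn Q(1)] by simp
    finally have img2: "ff ` ?Qe = Q" using ff_image[OF Qe] by simp
    have avoid: "(ff ^^ i) x \<notin> ?Qe" if x: "x \<in> Q" and i: "i < ?L - 1" for x i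
    proof
      assume a: "(ff ^^ i) x \<in> ?Qe"
      have "(ff ^^ i) x \<in> (sg n ^^ i) Q" using ff_iter_in[OF Q(1) x] .
      then have "(sg n ^^ i) Q = ?Qe" using uniq pin_n Q(1) Qe a by blast
      then have "i mod ?L = (?L - 1) mod ?L" using cyc.mod_eq[OF cycn Q(1)] by blast
      then show False using i L0 by simp
    qed
    have dQ: "diameter Q < \<delta>" "bounded Q" using piece[OF Q(1)] n by auto
    have dQe: "diameter ?Qe < \<delta>" "bounded ?Qe" using piece[OF Qe] n by auto
    obtain g' where g': "g' \<in> homeos X" "Dist_H X ff g' < \<delta>" "\<exists>x\<in>X. (g' ^^ ?L) x = x"
      using perturb[OF neX g L0 _ _ _ img1 img2 avoid dQ(1) dQe(1) dQ(2) dQe(2)] piece[OF Q(1)] piece[OF Qe]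
      by blast
    then show "\<exists>g\<in>homeos X. Dist_H X ff g < \<delta> \<and> (\<exists>x\<in>X. \<exists>m>0. \<not> 3 dvd m \<and> (g ^^ m) x = x)"
      using L0 Q(2) by blast
  qed
qed

end

theorem corollary1p3:
  fixes X :: "'a::metric_space set"
  assumes "cantor_space X"
  shows "\<exists>f\<in>homeos X. topologically_stable X (f ^^ 3) \<and> \<not> topologically_stable X f"
proof -
  interpret cantor_ctx X by unfold_locales (rule assms)
  obtain g where g: "homeomorphism X X ff g" using ff_homeo by blast
  have "ff \<in> homeos X" unfolding homeos_def using g by blast
  then show ?thesis using ts3 not_ts by blast
qed


end
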